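(* Let $I\subset\mathbb R$ be a non-trivial compact interval and $\varphi\in\hat{\mathcal C}_{\mathbb R}(\overline{\mathbb C}\setminus I)$. Then (i) $\mathrm{Re}\,(\sum_Z\varphi)$ is bounded on $\mathbb H^+$ and the function it defines on $\mathbb H^+/\mathbb Z$ extends continuously to $\widehat{\mathbb H^+/\mathbb Z}$; (ii) $\sup_{\mathbb H^+}|\mathrm{Re}\sum_Z\varphi|\le C\sup_{\mathbb H^+}|\mathrm{Re}\,\varphi|$ for a constant $C$ depending only on $I$.
   Context: For $\varphi$ holomorphic on $\mathbb C\setminus I$ and vanishing at $\infty$, $\sum_Z\varphi(z):=\lim_{N\to\infty}\sum_{n=-N}^N\varphi(z-n)$ for $z\in\mathbb C\setminus\mathbb R$ (it is holomorphic and $1$-periodic). The space $\hat{\mathbb H}^+=\mathbb H^+\sqcup(\mathbb R\setminus\mathbb Q)\sqcup(\overline{\mathbb Q}\times[-\pi/2,\pi/2])$ ($\overline{\mathbb Q}=\mathbb Q\cup\{\infty\}$) has the topology with fundamental systems of neighbourhoods ($\varepsilon>0$ small): (a) at $z_0\in\mathbb H^+$, Euclidean discs; (b) at irrational $\alpha_0$: $\{z\in\mathbb H^+:|z-\alpha_0|<\varepsilon\}\cup\{\alpha\in\mathbb R\setminus\mathbb Q:|\alpha-\alpha_0|<\varepsilon\}\cup\{(\alpha,\theta):\alpha\in\mathbb Q,|\alpha-\alpha_0|<\varepsilon\}$; (c) at $(\alpha_0,\pi/2)$, $\alpha_0\in\mathbb Q$: $\{z\in\mathbb H^+:|z-\alpha_0|<\varepsilon,\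 0<\arg(z-\alpha_0)<\varepsilon\}\cup\{\alpha\in\mathbb R\setminus\mathbb Q:0<\alpha-\alpha_0<\varepsilon\}\cup\{(\alpha,\theta):\alpha\in\mathbb Q,0<\alpha-\alpha_0<\varepsilon\}\cup\{(\alpha_0,\theta):\pi/2-\varepsilon<\theta\le\pi/2\}$, and at $(\alpha_0,-\pi/2)$: $\{z\in\mathbb H^+:|z-\alpha_0|<\varepsilon,\ \pi-\varepsilon<\arg(z-\alpha_0)<\pi\}\cup\{\alpha\in\mathbb R\setminus\mathbb Q:0<\alpha_0-\alpha<\varepsilon\}\cup\{(\alpha,\theta):\alpha\in\mathbb Q,0<\alpha_0-\alpha<\varepsilon\}\cup\{(\alpha_0,\theta):-\pi/2\le\theta<-\pi/2+\varepsilon\}$; (d) at $(\alpha_0,\theta_0)$, $\alpha_0\in\mathbb Q$, $|\theta_0|<\pi/2$: $\{z\in\mathbb H^+:|z-\alpha_0|<\varepsilon,\ |\pi/2-\arg(z-\alpha_0)-\theta_0|<\varepsilon\}\cup\{(\alpha_0,\theta):|\theta-\theta_0|<\varepsilon\}$; (e),(f) analogous neighbourhoods at the points $(\infty,\theta)$ (not needed below). $\widehat{\mathbb H^+/\mathbb Z}$ is the compactification of $\mathbb H^+/\mathbb Z$ obtained by taking the quotient of $\mathbb H^+\sqcup(\mathbb R\setminus\mathbb Q)\sqcup(\mathbb Q\times[-\pi/2,\pi/2])\subset\hat{\mathbb H}^+$ by the translations $z\mapsto z+1$, $\alpha\mapsto\alpha+1$, $(\alpha,\theta)\mapsto(\alpha+1,\theta)$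 (with the quotient topology) and adding a point $i\infty$ whose neighbourhoods are $\{i\infty\}\cup\{\mathrm{Im}\,z>M\}/\mathbb Z$; it is homeomorphic to a closed disc. $\hat{\mathcal C}_{\mathbb R}(\overline{\mathbb C}\setminus I)$ is the space of functions $\varphi$ holomorphic on $\mathbb C\setminus I$, vanishing at $\infty$, real ($\varphi(\bar z)=\overline{\varphi(z)}$), whose real part on $\mathbb H^+$ extends continuously to $\hat{\mathbb H}^+$. *)

theory Defs
  imports "HOL-Analysis.Analysis"
begin

text \<open>Points of the finite part of the space hat-H+ :
  Up z (z in the upper half plane), Irr a (a irrational),
  RatP a th (a rational, th in [-pi/2, pi/2]).\<close>
datatype hpt = Up complex | Irr real | RatP real real

definition hvalid :: "hpt \<Rightarrow> bool" where
  "hvalid p = (case p of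
      Up z \<Rightarrow> Im z > 0
    | Irr a \<Rightarrow> a \<notin> \<rat>
    | RatP a th \<Rightarrow> a \<in> \<rat> \<and> - (pi/2) \<le> th \<and> th \<le> pi/2)"

definition hnbhd :: "hpt \<Rightarrow> real \<Rightarrow> hpt set" where
  "hnbhd p e = {q. hvalid q \<and> (case p of
      Up z0 \<Rightarrow> (\<exists>z. q = Up z \<and> cmod (z - z0) < e)
    | Irr a0 \<Rightarrow>
        (\<exists>z. q = Up z \<and> cmod (z - complex_of_real a0) < e)
      \<or> (\<exists>a. q = Irr a \<and> \<bar>a - a0\<bar> < e)
      \<or> (\<exists>a th. q = RatP a th \<and> \<bar>a - a0\<bar> < e)
    | RatP a0 th0 \<Rightarrow>
        (if th0 = pi/2 then
            (\<exists>z. q = Up z \<and> cmod (z - complex_of_real a0) < e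
                 \<and> 0 < Arg (z - complex_of_real a0) \<and> Arg (z - complex_of_real a0) < e)
          \<or> (\<exists>a. q = Irr a \<and> 0 < a - a0 \<and> a - a0 < e)
          \<or> (\<exists>a th. q = RatP a th \<and> 0 < a - a0 \<and> a - a0 < e)
          \<or> (\<exists>th. q = RatP a0 th \<and> pi/2 - e < th \<and> th \<le> pi/2)
         else if th0 = - (pi/2) then
            (\<exists>z. q = Up z \<and> cmod (z - complex_of_real a0) < e
                 \<and> pi - e < Arg (z - complex_of_real a0) \<and> Arg (z - complex_of_real a0) < pi)
          \<or> (\<exists>a. q = Irr a \<and> 0 < a0 - a \<and> a0 - a < e)
          \<or> (\<exists>a th. q = RatP a th \<and> 0 < a0 - a \<and> a0 - a < e)
          \<or> (\<exists>th. q = RatP a0 th \<and> - (pi/2) \<le> th \<and> th < - (pi/2) + e)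
         else
            (\<exists>z. q = Up z \<and> cmod (z - complex_of_real a0) < e
                 \<and> \<bar>pi/2 - Arg (z - complex_of_real a0) - th0\<bar> < e)
          \<or> (\<exists>th. q = RatP a0 th \<and> \<bar>th - th0\<bar> < e)))}"

definition hcont_at :: "(hpt \<Rightarrow> real) \<Rightarrow> hpt \<Rightarrow> bool" where
  "hcont_at F p = (\<forall>r>0. \<exists>e>0. \<forall>q\<in>hnbhd p e. \<bar>F q - F p\<bar> < r)"

fun hshift :: "hpt \<Rightarrow> hpt" where
  "hshift (Up z) = Up (z + 1)"
| "hshift (Irr a) = Irr (a + 1)"
| "hshift (RatP a th) = RatP (a + 1) th"

definition ChatR :: "real \<Rightarrow> real \<Rightarrow> (complex \<Rightarrow> complex) set" where
  "ChatR a b = {\<phi>.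
      \<phi> holomorphic_on (- (complex_of_real ` {a..b}))
    \<and> (\<phi> \<longlongrightarrow> 0) at_infinity
    \<and> (\<forall>z. z \<notin> complex_of_real ` {a..b} \<longrightarrow> \<phi> (cnj z) = cnj (\<phi> z))
    \<and> (\<exists>F. (\<forall>z. Im z > 0 \<longrightarrow> F (Up z) = Re (\<phi> z))
           \<and> (\<forall>p. hvalid p \<longrightarrow> hcont_at F p))}"

definition sumZ_part :: "(complex \<Rightarrow> complex) \<Rightarrow> complex \<Rightarrow> nat \<Rightarrow> complex" where
  "sumZ_part \<phi> z N = (\<Sum>n = - int N..int N. \<phi> (z - of_int n))"

definition sumZ :: "(complex \<Rightarrow> complex) \<Rightarrow> complex \<Rightarrow> complex" where
  "sumZ \<phi> z = lim (sumZ_part \<phi> z)"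

end

theory Submission
  imports Defs "HOL-Complex_Analysis.Complex_Analysis"
begin


fun hpos :: "hpt \<Rightarrow> complex" where
  "hpos (Up z) = z" | "hpos (Irr a) = of_real a" | "hpos (RatP a th) = of_real a"

fun shb :: "int \<Rightarrow> hpt \<Rightarrow> hpt" where
  "shb k (Up z) = Up (z + of_int k)"
| "shb k (Irr a) = Irr (a + of_int k)"
| "shb k (RatP a th) = RatP (a + of_int k) th"

lemma Rats_add_int_iff: "(a + of_int k \<in> \<rat>) = (a \<in> \<rat>)"
proof
  assume "a + of_int k \<in> \<rat>"
  then have "a + of_int k - of_int k \<in> \<rat>" by (intro Rats_diff_iff[THEN iffD2]) auto
  then show "a \<in> \<rat>" by simp
qed auto

lemma hvalid_shb[simp]: "hvalid (shb k p) = hvalid p"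
  by (cases p) (auto simp: hvalid_def Rats_add_int_iff)

lemma hpos_shb[simp]: "hpos (shb k p) = hpos p + of_int k"
  by (cases p) auto

lemma shb_0[simp]: "shb 0 p = p" by (cases p) auto
lemma shb_shb[simp]: "shb k (shb l p) = shb (k + l) p" by (cases p) (auto simp: algebra_simps)
lemma hshift_shb: "hshift p = shb 1 p" by (cases p) auto

lemma hnbhd_valid: "q \<in> hnbhd p e \<Longrightarrow> hvalid q" by (simp add: hnbhd_def)

lemma hvalid_Im: "hvalid q \<Longrightarrow> Im (hpos q) \<ge> 0"
  by (cases q) (auto simp: hvalid_def)

lemma hvalid_Up: "hvalid (Up z) = (Im z > 0)" by (simp add: hvalid_def)

lemma hnbhd_pos: assumes "q \<in> hnbhd p e" "e > 0" shows "cmod (hpos q - hpos p) < e"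
  using assms unfolding hnbhd_def
  by (cases p; cases q) (auto split: if_splits simp: norm_minus_commute abs_minus_commute
       simp flip: of_real_diff)

lemma hnbhd_mono: assumes "q \<in> hnbhd p e" "e \<le> e'" shows "q \<in> hnbhd p e'"
  using assms unfolding hnbhd_def
  by (cases p; cases q) (auto split: if_splits)

lemma hnbhd_shb: assumes "q \<in> hnbhd p e" shows "shb k q \<in> hnbhd (shb k p) e"
proof -
  have A: "\<And>z a. z + of_int k - complex_of_real (a + of_int k) = z - complex_of_real a"
    by simp
  show ?thesis using assms unfolding hnbhd_def
    by (cases p; cases q) (auto split: if_splits simp: hvalid_def Rats_add_int_iff A)
qed



lemma hcont_at_shb:
  assumes "\<forall>p. hvalid p \<longrightarrow> hcont_at F p" "hvalid p"
  shows "hcont_at (\<lambda>q. F (shb k q)) p"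
  unfolding hcont_at_def
proof (intro allI impI)
  fix r :: real assume "r > 0"
  from assms have "hcont_at F (shb k p)" by simp
  with \<open>r>0\<close> obtain e where "e > 0" "\<forall>q\<in>hnbhd (shb k p) e. \<bar>F q - F (shb k p)\<bar> < r"
    unfolding hcont_at_def by blast
  then show "\<exists>e>0. \<forall>q\<in>hnbhd p e. \<bar>F (shb k q) - F (shb k p)\<bar> < r"
    using hnbhd_shb by blast
qed

lemma hcont_at_add:
  assumes "hcont_at F p" "hcont_at G p"
  shows "hcont_at (\<lambda>q. F q + G q) p"
  unfolding hcont_at_def
proof (intro allI impI)
  fix r :: real assume "r > 0"
  then have r2: "r/2 > 0" by simp
  obtain e1 where e1: "e1 > 0" "\<forall>q\<in>hnbhd p e1. \<bar>F q - F p\<bar> < r/2"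
    using assms(1) r2 unfolding hcont_at_def by blast
  obtain e2 where e2: "e2 > 0" "\<forall>q\<in>hnbhd p e2. \<bar>G q - G p\<bar> < r/2"
    using assms(2) r2 unfolding hcont_at_def by blast
  show "\<exists>e>0. \<forall>q\<in>hnbhd p e. \<bar>F q + G q - (F p + G p)\<bar> < r"
  proof (intro exI[of _ "min e1 e2"] conjI ballI)
    show "min e1 e2 > 0" using e1 e2 by simp
    fix q assume "q \<in> hnbhd p (min e1 e2)"
    then have "q \<in> hnbhd p e1" "q \<in> hnbhd p e2" using hnbhd_mono by fastforce+
    then have "\<bar>F q - F p\<bar> < r/2" "\<bar>G q - G p\<bar> < r/2" using e1 e2 by blast+
    then show "\<bar>F q + G q - (F p + G p)\<bar> < r" by linarith
  qed
qed

lemma hcont_at_const: "hcont_at (\<lambda>q. c) p"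
  unfolding hcont_at_def by (auto intro: exI[of _ 1])

lemma hcont_at_sum:
  assumes "finite S" "\<And>i. i \<in> S \<Longrightarrow> hcont_at (F i) p"
  shows "hcont_at (\<lambda>q. \<Sum>i\<in>S. F i q) p"
  using assms
proof (induction S rule: finite_induct)
  case empty then show ?case by (simp add: hcont_at_const)
next
  case (insert x S)
  then show ?case by (simp add: hcont_at_add)
qed

lemma hcont_at_pos:
  assumes "\<forall>r>0. \<exists>d>0. \<forall>w. Im w \<ge> 0 \<and> cmod (w - hpos p) < d \<longrightarrow> \<bar>H w - H (hpos p)\<bar> < r"
  shows "hcont_at (\<lambda>q. H (hpos q)) p"
  unfolding hcont_at_def
proof (intro allI impI)
  fix r :: real assume "r > 0"
  then obtain d where d: "d > 0" "\<forall>w. Im w \<ge> 0 \<and> cmod (w - hpos p) < d \<longrightarrow> \<bar>H w - H (hpos p)\<bar> < r"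
    using assms by blast
  show "\<exists>e>0. \<forall>q\<in>hnbhd p e. \<bar>H (hpos q) - H (hpos p)\<bar> < r"
    using d hnbhd_pos hnbhd_valid hvalid_Im by (intro exI[of _ d]) blast
qed

lemma hcont_at_cong:
  assumes "hcont_at F p" "e0 > 0" "\<And>q. q \<in> hnbhd p e0 \<Longrightarrow> G q = F q" "G p = F p"
  shows "hcont_at G p"
  unfolding hcont_at_def
proof (intro allI impI)
  fix r :: real assume "r > 0"
  then obtain e where e: "e > 0" "\<forall>q\<in>hnbhd p e. \<bar>F q - F p\<bar> < r"
    using assms(1) unfolding hcont_at_def by blast
  show "\<exists>e>0. \<forall>q\<in>hnbhd p e. \<bar>G q - G p\<bar> < r"
  proof (intro exI[of _ "min e e0"] conjI ballI)
    show "min e e0 > 0" using e assms by simp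
    fix q assume "q \<in> hnbhd p (min e e0)"
    then have "q \<in> hnbhd p e" "q \<in> hnbhd p e0" using hnbhd_mono by fastforce+
    then show "\<bar>G q - G p\<bar> < r" using e assms by fastforce
  qed
qed

lemma Arg_ray: assumes "t > 0" "0 < al" "al < pi"
  shows "Arg (of_real t * cis al) = al" "Im (of_real t * cis al) > 0" "cmod (of_real t * cis al) = t"
proof -
  show "Arg (of_real t * cis al) = al" using assms by (simp add: Arg_cis)
  show "Im (of_real t * cis al) > 0" using assms by (simp add: sin_gt_zero)
  show "cmod (of_real t * cis al) = t" using assms by (simp add: norm_mult)
qed

lemma exists_Up_in_nbhd:
  assumes "hvalid q" "\<And>z. q \<noteq> Up z" "e > 0"
  shows "\<exists>z. Up z \<in> hnbhd q e"
proof (cases q)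
  case (Up z) then show ?thesis using assms by auto
next
  case (Irr x)
  define z where "z = of_real x + of_real (e/2) * cis (pi/2)"
  have "Im z > 0" "cmod (z - of_real x) < e" using Arg_ray[of "e/2" "pi/2"] assms by (auto simp: z_def)
  then show ?thesis using Irr by (auto simp: hnbhd_def hvalid_def intro!: exI[of _ z])
next
  case (RatP x th)
  have th: "-(pi/2) \<le> th" "th \<le> pi/2" using assms RatP by (auto simp: hvalid_def)
  define al where "al = (if th = pi/2 then min (e/2) (pi/2) else if th = -(pi/2) then max (pi - e/2) (pi/2)
     else pi/2 - th)"
  have al: "0 < al" "al < pi"
    using th assms(3) by (auto simp: al_def min_def max_def)
  define z where "z = of_real x + of_real (e/2) * cis al"
  have A: "Arg (z - of_real x) = al" "Im z > 0" "cmod (z - of_real x) < e"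
    using Arg_ray[of "e/2" al] al assms by (auto simp: z_def)
  have "Up z \<in> hnbhd q e"
    using A th assms(3) unfolding RatP hnbhd_def
    by (auto simp: hvalid_def al_def min_def max_def)
  then show ?thesis by blast
qed



lemma F_boundary_value:
  fixes \<phi> :: "complex \<Rightarrow> complex"
  assumes "hvalid q" "\<And>z. q \<noteq> Up z" "hcont_at F q" "isCont \<phi> (hpos q)"
    "\<And>z. Im z > 0 \<Longrightarrow> F (Up z) = Re (\<phi> z)"
  shows "F q = Re (\<phi> (hpos q))"
proof -
  have "\<bar>F q - Re (\<phi> (hpos q))\<bar> \<le> r" if "r > 0" for r
  proof -
    have r2: "r/2 > 0" using \<open>r>0\<close> by simp
    from assms(4)[unfolded continuous_at_eps_delta, rule_format, OF r2]
    obtain d where d: "d > 0" "\<And>w. cmod (w - hpos q) < d \<Longrightarrow> cmod (\<phi> w - \<phi> (hpos q)) < r/2"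
      by (auto simp: dist_norm)
    from assms(3)[unfolded hcont_at_def, rule_format, OF r2]
    obtain e where e: "e > 0" "\<forall>p\<in>hnbhd q e. \<bar>F p - F q\<bar> < r/2"
      by blast
    have "min d e > 0" using d e by simp
    then obtain z where z: "Up z \<in> hnbhd q (min d e)"
      using exists_Up_in_nbhd[OF assms(1,2)] by blast
    have "Up z \<in> hnbhd q e" using z hnbhd_mono by fastforce
    then have 1: "\<bar>F (Up z) - F q\<bar> < r/2" using e by blast
    have "cmod (z - hpos q) < min d e" using hnbhd_pos[OF z] d e by simp
    then have "cmod (\<phi> z - \<phi> (hpos q)) < r/2" using d by simp
    then have "\<bar>Re (\<phi> z - \<phi> (hpos q))\<bar> < r/2"
      using abs_Re_le_cmod le_less_trans by blast
    then have 2: "\<bar>Re (\<phi> z) - Re (\<phi> (hpos q))\<bar> < r/2" by simp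
    have "Im z > 0" using hnbhd_valid[OF z] by (simp add: hvalid_def)
    then have "F (Up z) = Re (\<phi> z)" by (rule assms(5))
    with 1 2 show ?thesis by linarith
  qed
  then have "\<bar>F q - Re (\<phi> (hpos q))\<bar> \<le> 0"
    using field_le_epsilon[of "\<bar>F q - Re (\<phi> (hpos q))\<bar>" 0] by simp
  then show ?thesis by simp
qed

lemma F_local_bound:
  assumes cont: "\<forall>p. hvalid p \<longrightarrow> hcont_at F p"
  shows "\<exists>d>0. \<exists>B. \<forall>z. Im z > 0 \<and> cmod (z - of_real x0) < d \<longrightarrow> \<bar>F (Up z)\<bar> \<le> B"
proof (cases "x0 \<in> \<rat>")
  case False
  then have "hcont_at F (Irr x0)" using cont by (simp add: hvalid_def)
  then obtain e where e: "e > 0" "\<forall>q\<in>hnbhd (Irr x0) e. \<bar>F q - F (Irr x0)\<bar> < 1"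
    unfolding hcont_at_def using zero_less_one by blast
  show ?thesis
  proof (rule exI[of _ e], intro conjI exI[of _ "\<bar>F (Irr x0)\<bar> + 1"] allI impI)
    fix z assume z: "Im z > 0 \<and> cmod (z - of_real x0) < e"
    then have "Up z \<in> hnbhd (Irr x0) e" by (simp add: hnbhd_def hvalid_def)
    with e show "\<bar>F (Up z)\<bar> \<le> \<bar>F (Irr x0)\<bar> + 1" by fastforce
  qed (use e in auto)
next
  case True
  have "\<exists>e>0. \<forall>q\<in>hnbhd (RatP x0 th) e. \<bar>F q - F (RatP x0 th)\<bar> < 1"
    if "th \<in> {-(pi/2)..pi/2}" for th
  proof -
    have v: "hvalid (RatP x0 th)" unfolding hvalid_def using that True by simp
    have "hcont_at F (RatP x0 th)" using cont v by blast
    then show ?thesis unfolding hcont_at_def using zero_less_one by blast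
  qed
  then have "\<forall>th\<in>{-(pi/2)..pi/2}. \<exists>e>0. \<forall>q\<in>hnbhd (RatP x0 th) e. \<bar>F q - F (RatP x0 th)\<bar> < 1"
    by blast
  from bchoice[OF this] obtain E where E0: "\<forall>th\<in>{-(pi/2)..pi/2}. E th > 0 \<and>
      (\<forall>q\<in>hnbhd (RatP x0 th) (E th). \<bar>F q - F (RatP x0 th)\<bar> < 1)"
    by blast
  then have E: "\<And>th. th \<in> {-(pi/2)..pi/2} \<Longrightarrow> E th > 0 \<and>
      (\<forall>q\<in>hnbhd (RatP x0 th) (E th). \<bar>F q - F (RatP x0 th)\<bar> < 1)" by blast
  have cpt: "compact {-(pi/2)..pi/2}" by (rule compact_Icc)
  have cover: "{-(pi/2)..pi/2} \<subseteq> (\<Union>th\<in>{-(pi/2)..pi/2}. ball th (E th))"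
  proof
    fix x assume xin: "x \<in> {-(pi/2)..pi/2}"
    then have "x \<in> ball x (E x)" using E by simp
    then show "x \<in> (\<Union>th\<in>{-(pi/2)..pi/2}. ball th (E th))" using xin by blast
  qed
  have opn: "\<And>th. th \<in> {-(pi/2)..pi/2} \<Longrightarrow> open (ball th (E th))" by simp
  obtain T where T: "T \<subseteq> {-(pi/2)..pi/2}" "finite T"
      "{-(pi/2)..pi/2} \<subseteq> (\<Union>th\<in>T. ball th (E th))"
    using compactE_image[OF cpt opn cover] by blast
  have Tne: "T \<noteq> {}" using T(3) by auto
  define d where "d = Min (E ` T)"
  define B where "B = Max ((\<lambda>th. \<bar>F (RatP x0 th)\<bar> + 1) ` T)"
  have d: "d > 0" unfolding d_def
  proof (subst Min_gr_iff)
    show "finite (E ` T)" using T by simp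
    show "E ` T \<noteq> {}" using Tne by simp
    show "\<forall>x\<in>E ` T. 0 < x" using T(1) E by blast
  qed
  show ?thesis
  proof (rule exI[of _ d], intro conjI exI[of _ B] allI impI d)
    fix z assume z: "Im z > 0 \<and> cmod (z - of_real x0) < d"
    define w where "w = z - of_real x0"
    have "Im w > 0" using z by (simp add: w_def)
    then have A: "0 < Arg w" "Arg w < pi" using Arg_lt_pi by blast+
    define th where "th = pi/2 - Arg w"
    have "th \<in> {-(pi/2)..pi/2}" using A by (simp add: th_def)
    then obtain t where t: "t \<in> T" "dist t th < E t" using T(3) by auto
    have tr: "-(pi/2) \<le> t" "t \<le> pi/2" using t T(1) by auto
    have "d \<le> E t" using t T unfolding d_def by simp
    then have wz: "cmod w < E t" using z by (simp add: w_def)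
    have dd: "\<bar>t - (pi/2 - Arg w)\<bar> < E t" using t by (simp add: th_def dist_real_def)
    have C: "(t = pi/2 \<longrightarrow> 0 < Arg w \<and> Arg w < E t) \<and> (t = -(pi/2) \<longrightarrow> pi - E t < Arg w \<and> Arg w < pi)
       \<and> \<bar>pi/2 - Arg w - t\<bar> < E t"
      using dd A by (auto simp: abs_if split: if_splits)
    have "Up z \<in> hnbhd (RatP x0 t) (E t)"
      using C wz z unfolding hnbhd_def hvalid_def
      by (auto simp: w_def)
    then have "\<bar>F (Up z) - F (RatP x0 t)\<bar> < 1" using E t T(1) by blast
    moreover have "\<bar>F (RatP x0 t)\<bar> + 1 \<le> B" using t T unfolding B_def by simp
    ultimately show "\<bar>F (Up z)\<bar> \<le> B" by linarith
  qed
qed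



lemma schwarz_strict_scaled:
  fixes f :: "complex \<Rightarrow> complex"
  assumes hol: "f holomorphic_on ball 0 r" and r: "r > 0" and f0: "f 0 = 0"
    and B: "B > 0" and bd: "\<And>u. u \<in> ball 0 r \<Longrightarrow> norm (f u) < B"
    and u: "u \<in> ball 0 r"
  shows "norm (f u) \<le> B * norm u / r"
proof -
  define h where "h = (\<lambda>v. f (of_real r * v) / of_real B)"
  have "(\<lambda>v::complex. of_real r * v) ` ball 0 1 \<subseteq> ball 0 r"
  proof (rule subsetI)
    fix x :: complex assume "x \<in> (\<lambda>v. of_real r * v) ` ball 0 1"
    then obtain v :: complex where v0: "v \<in> ball 0 1" "x = of_real r * v" by blast
    then have v: "x = of_real r * v" "norm v < 1" by auto
    have "r * norm v < r * 1" using r v by (intro mult_strict_left_mono) auto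
    then show "x \<in> ball 0 r" using r v by (simp add: norm_mult)
  qed
  then have "h holomorphic_on ball 0 1" unfolding h_def
    by (intro holomorphic_intros holomorphic_on_compose_gen[unfolded o_def, OF _ hol]) (use B in auto)
  moreover have "h 0 = 0" by (simp add: h_def f0)
  moreover have "norm (h v) < 1" if "norm v < 1" for v
  proof -
    have "r * norm v < r * 1" using r that by (intro mult_strict_left_mono) auto
    then have "of_real r * v \<in> ball 0 r" using r by (simp add: norm_mult)
    then have "norm (f (of_real r * v)) < B" by (rule bd)
    then show ?thesis using B by (simp add: h_def norm_divide)
  qed
  moreover have "norm (u / of_real r) < 1" using u r by (simp add: norm_divide)
  ultimately have "norm (h (u / of_real r)) \<le> norm (u / of_real r)"
    by (intro Schwarz_Lemma(1)) auto
  then show ?thesis using r B by (simp add: h_def norm_divide field_simps)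
qed

lemma schwarz_scaled:
  fixes f :: "complex \<Rightarrow> complex"
  assumes hol: "f holomorphic_on ball 0 r" and r: "r > 0" and f0: "f 0 = 0"
    and bd: "\<And>u. u \<in> ball 0 r \<Longrightarrow> norm (f u) \<le> B"
    and u: "u \<in> ball 0 r"
  shows "norm (f u) \<le> B * norm u / r"
proof -
  have "norm (f 0) \<le> B" using bd[of 0] r by simp
  then have B0: "B \<ge> 0" using norm_ge_zero order_trans by blast
  have "norm (f u) \<le> B * norm u / r + e" if e: "e > 0" for e
  proof -
    define B' where "B' = B + e * r / (norm u + 1)"
    have "norm u + 1 > 0" by (simp add: add_nonneg_pos)
    then have pos: "e * r / (norm u + 1) > 0" using e r by simp
    have bd': "norm (f v) < B'" if "v \<in> ball 0 r" for v
      using bd[OF that] pos unfolding B'_def by linarith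
    have "B' > 0" using pos B0 by (simp add: B'_def)
    then have "norm (f u) \<le> B' * norm u / r"
      by (rule schwarz_strict_scaled[OF hol r f0 _ bd' u])
    also have "\<dots> = B * norm u / r + e * (norm u / (norm u + 1))"
      using r by (simp add: B'_def field_simps)
    also have "\<dots> \<le> B * norm u / r + e"
    proof -
      have "norm u / (norm u + 1) \<le> 1" by (simp add: add_nonneg_pos)
      then have "e * (norm u / (norm u + 1)) \<le> e" using e by (intro mult_left_le) auto
      then show ?thesis by simp
    qed
    finally show ?thesis .
  qed
  then show ?thesis by (rule field_le_epsilon)
qed


lemma exp_three_halves: "exp (3/2::real) > 3"
proof -
  have "exp (3/4::real) \<ge> 1 + 3/4" by (rule exp_ge_add_one_self)
  then have "exp (3/4::real) * exp (3/4) \<ge> (7/4) * (7/4)"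
    by (intro mult_mono) auto
  also have "exp (3/4::real) * exp (3/4) = exp (3/2)" by (simp flip: exp_add)
  finally show ?thesis by simp
qed

lemma cayley_lt1: fixes z :: complex assumes "Re z > 0" shows "norm ((z - 1) / (z + 1)) < 1"
proof -
  have "(norm (z - 1))^2 < (norm (z + 1))^2"
    using assms unfolding cmod_power2 by (simp add: power2_eq_square algebra_simps)
  then have "norm (z - 1) < norm (z + 1)" by (rule power2_less_imp_less) simp
  moreover have "z + 1 \<noteq> 0" using assms by (metis add_cancel_right_left add_pos_pos one_complex.simps(1) plus_complex.simps(1) zero_complex.simps(1) zero_less_one less_irrefl)
  ultimately show ?thesis by (simp add: norm_divide divide_less_eq)
qed

lemma strip_bound_aux:
  fixes g :: "complex \<Rightarrow> complex"
  assumes hol: "g holomorphic_on ball 0 \<rho>" and \<rho>: "\<rho> > 0" and g0: "g 0 = 0"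
    and bd: "\<And>u. u \<in> ball 0 \<rho> \<Longrightarrow> \<bar>Re (g u)\<bar> \<le> M"
    and u: "norm u < \<rho>/2" and M': "M' > M"
  shows "norm (g u) \<le> M + M'"
proof -
  have M0: "M \<ge> 0" using bd[of 0] \<rho> g0 by simp
  then have M'0: "M' > 0" using M' by linarith
  define k where "k = pi / (2 * M')"
  have k: "k > 0" using M'0 by (simp add: k_def)
  define w where "w = (\<lambda>v. \<i> * of_real k * g v)"
  define \<zeta> where "\<zeta> = (\<lambda>v. exp (w v))"
  have Imw: "Im (w v) = k * Re (g v)" for v by (simp add: w_def)
  have Rew: "Re (w v) = - k * Im (g v)" for v by (simp add: w_def)
  have Rez: "Re (\<zeta> v) > 0" if "v \<in> ball 0 \<rho>" for v
  proof -
    have "\<bar>k * Re (g v)\<bar> \<le> k * M" using bd[OF that] k by (simp add: abs_mult)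
    also have "\<dots> < k * M'" using k M' by simp
    also have "k * M' = pi/2" using M'0 by (simp add: k_def)
    finally have "-(pi/2) < Im (w v)" "Im (w v) < pi/2" using Imw[of v] by linarith+
    then have "cos (Im (w v)) > 0" by (rule cos_gt_zero_pi)
    then show ?thesis by (simp add: \<zeta>_def Re_exp)
  qed
  have nz: "\<zeta> v + 1 \<noteq> 0" if "v \<in> ball 0 \<rho>" for v
    using Rez[OF that] by (metis add.right_neutral add_less_same_cancel1 not_less_iff_gr_or_eq one_complex.simps(1) plus_complex.simps(1) zero_complex.simps(1) zero_less_one)
  define h where "h = (\<lambda>v. (\<zeta> v - 1) / (\<zeta> v + 1))"
  have holh: "h holomorphic_on ball 0 \<rho>"
    unfolding h_def \<zeta>_def w_def using nz unfolding \<zeta>_def w_def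
    by (intro holomorphic_intros hol) auto
  have h0: "h 0 = 0" by (simp add: h_def \<zeta>_def w_def g0)
  have hb: "norm (h v) < 1" if "v \<in> ball 0 \<rho>" for v
    unfolding h_def by (rule cayley_lt1[OF Rez[OF that]])
  have uin: "u \<in> ball 0 \<rho>" using u \<rho> by simp
  have "norm (h u) \<le> 1 * norm u / \<rho>"
    by (rule schwarz_strict_scaled[OF holh \<rho> h0 _ hb uin]) simp
  moreover have "norm u / \<rho> < 1/2" using u \<rho> by (simp add: divide_less_eq)
  ultimately have hu: "norm (h u) < 1/2" by linarith
  define H where "H = h u"
  define Z where "Z = \<zeta> u"
  have "H * (Z + 1) = Z - 1" using nz[OF uin] by (simp add: H_def Z_def h_def)
  then have ZH: "Z * (1 - H) = 1 + H" by (simp add: algebra_simps)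
  have nH: "norm H < 1/2" using hu by (simp add: H_def)
  have "norm Z * (1 - norm H) \<le> norm Z * norm (1 - H)"
    by (intro mult_left_mono) (auto simp: norm_triangle_ineq2 intro: order_trans[OF _ norm_triangle_ineq3])
  also have "\<dots> = norm (1 + H)" by (simp flip: ZH add: norm_mult)
  also have "\<dots> \<le> 1 + norm H" by (metis norm_one norm_triangle_ineq)
  finally have Zup: "norm Z * (1 - norm H) \<le> 1 + norm H" .
  have "1 - norm H \<le> norm (1 + H)" by (metis norm_one norm_diff_ineq diff_minus_eq_add norm_minus_cancel)
  also have "\<dots> = norm Z * norm (1 - H)" by (simp flip: ZH add: norm_mult)
  also have "\<dots> \<le> norm Z * (1 + norm H)"
    by (intro mult_left_mono) (auto intro: order_trans[OF norm_triangle_ineq4] simp: norm_minus_cancel)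
  finally have Zlo: "1 - norm H \<le> norm Z * (1 + norm H)" .
  have nZ: "norm Z = exp (- k * Im (g u))" by (simp add: Z_def \<zeta>_def Rew)
  have Z3: "norm Z < 3"
  proof (rule ccontr)
    assume "\<not> norm Z < 3"
    then have "3 * (1 - norm H) \<le> norm Z * (1 - norm H)" using nH by (intro mult_right_mono) auto
    then have "3 * (1 - norm H) \<le> 1 + norm H" using Zup by (rule order_trans)
    moreover have "3 * (1 - norm H) = 3 - 3 * norm H" by (simp add: right_diff_distrib)
    ultimately show False using nH by linarith
  qed
  have Z3': "norm Z > 1/3"
  proof (rule ccontr)
    assume "\<not> norm Z > 1/3"
    then have "norm Z * (1 + norm H) \<le> 1/3 * (1 + norm H)" by (intro mult_right_mono) auto
    with Zlo have "1 - norm H \<le> 1/3 * (1 + norm H)" by (rule order_trans)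
    moreover have "1/3 * (1 + norm H) = 1/3 + norm H / 3" by (simp add: distrib_left)
    ultimately show False using nH by linarith
  qed
  have e32: "exp (3/2::real) > 3" by (rule exp_three_halves)
  have "\<bar>k * Im (g u)\<bar> < 3/2"
  proof (rule ccontr)
    assume "\<not> \<bar>k * Im (g u)\<bar> < 3/2"
    then consider "k * Im (g u) \<ge> 3/2" | "k * Im (g u) \<le> -(3/2)" by linarith
    then show False
    proof cases
      case 1
      then have "exp (- k * Im (g u)) \<le> exp (-(3/2))" by simp
      also have "exp (-(3/2)::real) = inverse (exp (3/2))" by (simp add: exp_minus)
      also have "\<dots> < inverse 3" using e32 by (intro less_imp_inverse_less) auto
      also have "inverse (3::real) = 1/3" by simp
      finally show False using Z3' nZ by simp
    next
      case 2
      then have "3/2 \<le> - k * Im (g u)" by simp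
      then have "exp (3/2) \<le> exp (- k * Im (g u))" by (simp only: exp_le_cancel_iff)
      then have "exp (3/2) \<le> norm Z" unfolding nZ .
      then show False using Z3 e32 by linarith
    qed
  qed
  then have "k * \<bar>Im (g u)\<bar> < 3/2" using k by (simp add: abs_mult)
  then have "\<bar>Im (g u)\<bar> < 3 / (2 * k)" using k by (simp add: field_simps)
  also have "3 / (2 * k) = 3 * M' / pi" using M'0 by (simp add: k_def)
  also have "\<dots> \<le> M'" using M'0 pi_gt3 by (simp add: divide_le_eq)
  finally have "\<bar>Im (g u)\<bar> < M'" .
  moreover have "\<bar>Re (g u)\<bar> \<le> M" using bd[OF uin] .
  ultimately show ?thesis using cmod_le[of "g u"] by linarith
qed

lemma strip_bound:
  fixes g :: "complex \<Rightarrow> complex"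
  assumes hol: "g holomorphic_on ball 0 \<rho>" and \<rho>: "\<rho> > 0" and g0: "g 0 = 0"
    and bd: "\<And>u. u \<in> ball 0 \<rho> \<Longrightarrow> \<bar>Re (g u)\<bar> \<le> M"
    and u: "norm u < \<rho>/2"
  shows "norm (g u) \<le> 2 * M"
proof -
  have "norm (g u) \<le> 2 * M + e" if "e > 0" for e
    using strip_bound_aux[OF hol \<rho> g0 bd u, of "M + e"] that by simp
  then show ?thesis by (rule field_le_epsilon)
qed



definition ginv :: "(complex \<Rightarrow> complex) \<Rightarrow> complex \<Rightarrow> complex" where
  "ginv \<phi> u = (if u = 0 then 0 else \<phi> (inverse u))"

definition Gq :: "(complex \<Rightarrow> complex) \<Rightarrow> complex \<Rightarrow> complex" where
  "Gq \<phi> u = (if u = 0 then deriv (ginv \<phi>) 0 else (ginv \<phi> u - ginv \<phi> 0) / (u - 0))"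

locale lsetup =
  fixes \<phi> :: "complex \<Rightarrow> complex" and a b R0 :: real
  assumes R0: "R0 > 0" and IR: "\<And>t. t \<in> {a..b} \<Longrightarrow> \<bar>t\<bar> < R0"
    and hol: "\<phi> holomorphic_on (- (complex_of_real ` {a..b}))"
    and lim0: "(\<phi> \<longlongrightarrow> 0) at_infinity"
    and real: "\<And>z. z \<notin> complex_of_real ` {a..b} \<Longrightarrow> \<phi> (cnj z) = cnj (\<phi> z)"
begin

abbreviation "Ic \<equiv> complex_of_real ` {a..b}"

lemma big_notin: "norm w > R0 \<Longrightarrow> w \<notin> Ic"
  using IR by force

lemma g_hol: "ginv \<phi> holomorphic_on ball 0 (1/R0)"
proof -
  let ?S = "ball 0 (1/R0)"
  have inv_out: "inverse u \<notin> Ic" if "u \<in> ?S - {0}" for u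
  proof -
    have "norm u < 1/R0" "u \<noteq> 0" using that by auto
    then have nu: "norm u > 0" by simp
    have "R0 * norm u < R0 * (1/R0)" using \<open>norm u < 1/R0\<close> R0 by (intro mult_strict_left_mono) auto
    then have "R0 * norm u < 1" using R0 by simp
    then have "R0 < 1 / norm u" using nu by (simp add: less_divide_eq)
    then have "norm (inverse u) > R0" by (simp add: norm_inverse divide_inverse)
    then show ?thesis by (rule big_notin)
  qed
  have h1: "(\<lambda>u. \<phi> (inverse u)) holomorphic_on (?S - {0})"
  proof -
    have "inverse ` (?S - {0}) \<subseteq> - Ic"
    proof (rule image_subsetI)
      fix u :: complex assume "u \<in> ?S - {0}"
      then show "inverse u \<in> - Ic" using inv_out by simp
    qed
    moreover have "inverse holomorphic_on (?S - {0})" by (auto intro!: holomorphic_intros)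
    ultimately show ?thesis using holomorphic_on_compose_gen[OF _ hol] unfolding o_def by blast
  qed
  have h2: "ginv \<phi> holomorphic_on (?S - {0})"
    using h1 by (rule holomorphic_cong[THEN iffD1, rotated 2]) (auto simp: ginv_def)
  have c0: "isCont (ginv \<phi>) 0"
  proof -
    have "((\<lambda>u. \<phi> (inverse u)) \<longlongrightarrow> 0) (at 0)"
      by (rule filterlim_compose[OF lim0 filterlim_inverse_at_infinity])
    moreover have "\<forall>\<^sub>F u in at 0. \<phi> (inverse u) = ginv \<phi> u"
      by (auto simp: ginv_def eventually_at_filter)
    ultimately have "(ginv \<phi> \<longlongrightarrow> 0) (at 0)" by (rule Lim_transform_eventually)
    then show ?thesis by (simp add: continuous_at ginv_def)
  qed
  have "continuous_on ?S (ginv \<phi>)"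
  proof (rule continuous_at_imp_continuous_on, rule ballI)
    fix u :: complex assume u: "u \<in> ?S"
    show "isCont (ginv \<phi>) u"
    proof (cases "u = 0")
      case True then show ?thesis using c0 by simp
    next
      case False
      have "open (?S - {0})" by auto
      moreover have "continuous_on (?S - {0}) (ginv \<phi>)" using h2 by (rule holomorphic_on_imp_continuous_on)
      ultimately show ?thesis using u False continuous_on_eq_continuous_at by blast
    qed
  qed
  then show ?thesis using h2 by (rule no_isolated_singularity) auto
qed

lemma g0: "ginv \<phi> 0 = 0" by (simp add: ginv_def)

lemma Gq_hol: "Gq \<phi> holomorphic_on ball 0 (1/R0)"
  unfolding Gq_def using pole_lemma[OF g_hol, of 0] R0 by simp

lemma Gq_eq: "u \<noteq> 0 \<Longrightarrow> Gq \<phi> u = ginv \<phi> u / u" by (simp add: Gq_def g0)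

definition "cc = deriv (ginv \<phi>) 0"

lemma Gq0: "Gq \<phi> 0 = cc" by (simp add: Gq_def cc_def)

lemma cc_real: "Im cc = 0"
proof -
  define u where "u = (\<lambda>n. complex_of_real (1/(2*R0) * inverse (real (Suc n))))"
  have ulim: "u \<longlonglongrightarrow> 0" unfolding u_def
    by (rule tendsto_of_real[where a=0, simplified], rule tendsto_mult_right_zero, rule LIMSEQ_inverse_real_of_nat)
  have cont: "isCont (Gq \<phi>) 0"
  proof -
    have "0 \<in> ball (0::complex) (1/R0)" using R0 by simp
    then show ?thesis using holomorphic_on_imp_continuous_on[OF Gq_hol] continuous_on_eq_continuous_at[OF open_ball]
      by blast
  qed
  have "(\<lambda>n. Gq \<phi> (u n)) \<longlonglongrightarrow> Gq \<phi> 0" by (rule isCont_tendsto_compose[OF cont ulim])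
  then have "(\<lambda>n. Im (Gq \<phi> (u n))) \<longlonglongrightarrow> Im cc" unfolding Gq0 by (rule tendsto_Im)
  moreover have "Im (Gq \<phi> (u n)) = 0" for n
  proof -
    define t where "t = 1/(2*R0) * inverse (real (Suc n))"
    have t: "t > 0" using R0 by (simp add: t_def)
    have "t \<le> 1/(2*R0) * 1" unfolding t_def using R0 by (intro mult_left_mono) (auto simp: inverse_le_1_iff)
    then have "t < 1/R0" using R0 by (simp add: field_simps)
    then have "inverse t > R0" using t R0 by (simp add: field_simps)
    then have nI: "complex_of_real (inverse t) \<notin> Ic" by (intro big_notin) (use t in \<open>simp add: norm_inverse\<close>)
    have "cnj (\<phi> (complex_of_real (inverse t))) = \<phi> (complex_of_real (inverse t))"
      using real[OF nI] by simp
    then have "Im (cnj (\<phi> (complex_of_real (inverse t)))) = Im (\<phi> (complex_of_real (inverse t)))" by simp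
    then have "Im (\<phi> (complex_of_real (inverse t))) = 0" by simp
    then show ?thesis using t unfolding u_def t_def[symmetric]
      by (simp add: Gq_eq ginv_def Im_divide)
  qed
  ultimately have "(\<lambda>n. 0) \<longlonglongrightarrow> Im cc" by simp
  moreover have "(\<lambda>n. 0::real) \<longlonglongrightarrow> 0" by simp
  ultimately show ?thesis using LIMSEQ_unique by blast
qed

lemma inv_out: "u \<noteq> 0 \<Longrightarrow> norm u < 1/R0 \<Longrightarrow> inverse u \<notin> Ic"
proof -
  assume "u \<noteq> 0" "norm u < 1/R0"
  then have nu: "norm u > 0" by simp
  have "R0 * norm u < R0 * (1/R0)" using \<open>norm u < 1/R0\<close> R0 by (intro mult_strict_left_mono) auto
  then have "R0 * norm u < 1" using R0 by simp
  then have "R0 < 1 / norm u" using nu by (simp add: less_divide_eq)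
  then have "norm (inverse u) > R0" by (simp add: norm_inverse divide_inverse)
  then show ?thesis by (rule big_notin)
qed

lemma laurent_bounds:
  assumes bd: "\<And>w. w \<notin> Ic \<Longrightarrow> \<bar>Re (\<phi> w)\<bar> \<le> M"
  shows "norm cc \<le> 4*M*R0" "\<And>w. norm w > 2*R0 \<Longrightarrow> norm (\<phi> w - cc / w) \<le> 16*M*R0^2 / (norm w)^2"
proof -
  define \<rho> where "\<rho> = 1/R0"
  have \<rho>: "\<rho> > 0" using R0 by (simp add: \<rho>_def)
  define g where "g = ginv \<phi>"
  have M0: "M \<ge> 0"
  proof -
    have "norm (complex_of_real (R0 + 1)) > R0" using R0 by simp
    then have "complex_of_real (R0+1) \<notin> Ic" by (rule big_notin)
    from bd[OF this] show ?thesis by linarith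
  qed
  have bdg: "\<bar>Re (g u)\<bar> \<le> M" if "u \<in> ball 0 \<rho>" for u
  proof (cases "u = 0")
    case True then show ?thesis using M0 by (simp add: g_def g0)
  next
    case False
    then have "inverse u \<notin> Ic" using inv_out that by (simp add: \<rho>_def)
    then show ?thesis using bd False by (simp add: g_def ginv_def)
  qed
  have holg: "g holomorphic_on ball 0 \<rho>" using g_hol by (simp add: g_def \<rho>_def)
  have ss: "ball 0 (\<rho>/2) \<subseteq> ball (0::complex) \<rho>" using \<rho> by (intro subset_ball) simp
  have holg2: "g holomorphic_on ball 0 (\<rho>/2)" using holg ss by (rule holomorphic_on_subset)
  have s1: "norm (g u) \<le> 2*M" if "u \<in> ball 0 (\<rho>/2)" for u
    using strip_bound[OF holg \<rho> _ bdg] that by (simp add: g_def g0)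
  have s2: "norm (g u) \<le> 2*M * norm u / (\<rho>/2)" if "u \<in> ball 0 (\<rho>/2)" for u
    using schwarz_scaled[OF holg2 _ _ s1 that] \<rho> by (simp add: g_def g0)
  have r4: "2*M / (\<rho>/2) = 4*M*R0" using R0 by (simp add: \<rho>_def field_simps)
  have Gb: "norm (Gq \<phi> u) \<le> 4*M*R0" if "u \<in> ball 0 (\<rho>/2)" "u \<noteq> 0" for u
  proof -
    have "norm (Gq \<phi> u) = norm (g u) / norm u" using that by (simp add: Gq_eq g_def norm_divide)
    also have "\<dots> \<le> (2*M * norm u / (\<rho>/2)) / norm u" using s2[OF that(1)] that(2) by (intro divide_right_mono) auto
    also have "\<dots> = 4*M*R0" using that(2) r4 by simp
    finally show ?thesis .
  qed
  have holG: "Gq \<phi> holomorphic_on ball 0 (\<rho>/2)"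
    using Gq_hol ss unfolding \<rho>_def by (rule holomorphic_on_subset)
  have contG: "isCont (Gq \<phi>) 0"
  proof -
    have "0 \<in> ball (0::complex) (\<rho>/2)" using \<rho> by simp
    then show ?thesis using holomorphic_on_imp_continuous_on[OF holG] continuous_on_eq_continuous_at[OF open_ball]
      by blast
  qed
  have ev: "\<forall>\<^sub>F u in at 0. norm (Gq \<phi> u) \<le> 4*M*R0"
    unfolding eventually_at using \<rho> Gb by (intro exI[of _ "\<rho>/2"]) (auto simp: dist_norm)
  have ccb: "norm cc \<le> 4*M*R0"
    using Lim_norm_ubound[OF at_neq_bot contG[unfolded continuous_at] ev] by (simp add: Gq0)
  then show "norm cc \<le> 4*M*R0" .
  define f2 where "f2 = (\<lambda>u. Gq \<phi> u - cc)"
  have holf2: "f2 holomorphic_on ball 0 (\<rho>/2)" unfolding f2_def using holG by (intro holomorphic_intros)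
  have f2b: "norm (f2 u) \<le> 8*M*R0" if "u \<in> ball 0 (\<rho>/2)" for u
  proof (cases "u = 0")
    case True then show ?thesis using M0 R0 by (simp add: f2_def Gq0)
  next
    case False
    have "norm (f2 u) \<le> norm (Gq \<phi> u) + norm cc" unfolding f2_def by (rule norm_triangle_ineq4)
    then show ?thesis using Gb[OF that False] ccb by linarith
  qed
  have f2s: "norm (f2 u) \<le> 8*M*R0 * norm u / (\<rho>/2)" if "u \<in> ball 0 (\<rho>/2)" for u
    using schwarz_scaled[OF holf2 _ _ f2b that] \<rho> by (simp add: f2_def Gq0)
  fix w :: complex assume w: "norm w > 2*R0"
  then have w0: "w \<noteq> 0" using R0 by auto
  define u where "u = inverse w"
  have u0: "u \<noteq> 0" using w0 by (simp add: u_def)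
  have nu: "norm u = 1 / norm w" by (simp add: u_def norm_inverse divide_inverse)
  have nw: "norm w > 0" using w R0 by linarith
  have "1 / norm w < 1 / (2*R0)" using w R0 nw by (intro divide_strict_left_mono) auto
  then have "norm u < \<rho>/2" unfolding nu \<rho>_def by simp
  then have uin: "u \<in> ball 0 (\<rho>/2)" by simp
  have "\<phi> w = g u" using u0 w0 by (simp add: g_def ginv_def u_def)
  then have "\<phi> w - cc / w = u * f2 u" using u0
    by (simp add: f2_def Gq_eq g_def u_def field_simps)
  then have "norm (\<phi> w - cc / w) = norm u * norm (f2 u)" by (simp add: norm_mult)
  also have "\<dots> \<le> norm u * (8*M*R0 * norm u / (\<rho>/2))"
    using f2s[OF uin] by (intro mult_left_mono) auto
  also have "\<dots> = 16*M*R0^2 / (norm w)^2" unfolding nu \<rho>_def using w0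
    by (simp add: field_simps power2_eq_square)
  finally show "norm (\<phi> w - cc / w) \<le> 16*M*R0^2 / (norm w)^2" .
qed

end



lemma re_pair_ineq:
  fixes a b y :: real
  assumes p: "a^2 + y^2 > 0" and q: "b^2 + y^2 > 0"
  shows "\<bar>a/(a^2+y^2) + b/(b^2+y^2)\<bar> \<le> \<bar>a+b\<bar> / (sqrt (a^2+y^2) * sqrt (b^2+y^2))"
proof -
  define P where "P = sqrt (a^2+y^2)"
  define Q where "Q = sqrt (b^2+y^2)"
  have P: "P > 0" "P^2 = a^2+y^2" using p by (auto simp: P_def)
  have Q: "Q > 0" "Q^2 = b^2+y^2" using q by (auto simp: Q_def)
  have "(a*b + y^2)^2 \<le> (P*Q)^2"
  proof -
    have "(P*Q)^2 - (a*b + y^2)^2 = y^2 * (a - b)^2"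
      unfolding power_mult_distrib P(2) Q(2) by (simp add: power2_eq_square algebra_simps)
    then show ?thesis by (metis diff_ge_0_iff_ge zero_le_mult_iff zero_le_power2)
  qed
  then have ab: "\<bar>a*b + y^2\<bar> \<le> P*Q" using P Q by (metis abs_le_square_iff abs_of_pos mult_pos_pos)
  have "a/(a^2+y^2) + b/(b^2+y^2) = (a*(b^2+y^2) + b*(a^2+y^2)) / ((a^2+y^2)*(b^2+y^2))"
    using p q by (intro add_frac_eq) auto
  also have "a*(b^2+y^2) + b*(a^2+y^2) = (a+b)*(a*b+y^2)" by (simp add: algebra_simps power2_eq_square)
  finally have "a/(a^2+y^2) + b/(b^2+y^2) = (a+b)*(a*b+y^2) / (P^2 * Q^2)"
    unfolding P(2) Q(2) .
  then have "\<bar>a/(a^2+y^2) + b/(b^2+y^2)\<bar> = \<bar>a+b\<bar> * \<bar>a*b+y^2\<bar> / (P^2 * Q^2)"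
    by (simp add: abs_mult)
  also have "\<dots> \<le> \<bar>a+b\<bar> * (P*Q) / (P^2 * Q^2)"
    using ab P Q by (intro divide_right_mono mult_left_mono) auto
  also have "\<dots> = \<bar>a+b\<bar> / (P*Q)" using P(1) Q(1) by (simp add: power2_eq_square field_simps)
  finally show ?thesis by (simp add: P_def Q_def)
qed

definition Pr :: "(complex \<Rightarrow> complex) \<Rightarrow> nat \<Rightarrow> complex \<Rightarrow> complex" where
  "Pr \<phi> n w = \<phi> (w - of_nat n) + \<phi> (w + of_nat n)"

locale psetup =
  fixes \<phi> :: "complex \<Rightarrow> complex" and c :: complex and A R2 :: real
  assumes R2: "R2 > 0" and A: "A \<ge> 0" and creal: "Im c = 0"
    and decay: "\<And>w. norm w > R2 \<Longrightarrow> norm (\<phi> w - c / w) \<le> A / (norm w)^2"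
begin

lemma pair_bounds:
  assumes W: "\<bar>Re w\<bar> \<le> W" and n: "real n - W > R2"
  shows "\<bar>Re (Pr \<phi> n w)\<bar> \<le> (2*W*norm c + 2*A) / ((real n - W)^2 + (Im w)^2)"
    and "norm (Pr \<phi> n w) \<le> (2*norm c*norm w + 2*A) / (real n - W)^2"
proof -
  define d where "d = real n - W"
  have d: "d > R2" "d > 0" using n R2 by (auto simp: d_def)
  define z1 where "z1 = w - of_nat n"
  define z2 where "z2 = w + of_nat n"
  define y where "y = Im w"
  have Rz1: "Re z1 = Re w - real n" and Rz2: "Re z2 = Re w + real n" and Iz: "Im z1 = y" "Im z2 = y"
    by (auto simp: z1_def z2_def y_def)
  have a1: "\<bar>Re z1\<bar> \<ge> d" using W unfolding Rz1 d_def by linarith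
  have a2: "\<bar>Re z2\<bar> \<ge> d" using W unfolding Rz2 d_def by linarith
  have sq1: "(norm z1)^2 \<ge> d^2 + y^2"
  proof -
    have "d^2 \<le> (Re z1)^2" using a1 d by (metis abs_le_square_iff abs_of_pos)
    then show ?thesis unfolding cmod_power2 Iz by simp
  qed
  have sq2: "(norm z2)^2 \<ge> d^2 + y^2"
  proof -
    have "d^2 \<le> (Re z2)^2" using a2 d by (metis abs_le_square_iff abs_of_pos)
    then show ?thesis unfolding cmod_power2 Iz by simp
  qed
  have dy: "d^2 + y^2 > 0" using d by (simp add: add_pos_nonneg)
  have nz1: "norm z1 \<ge> d" using a1 abs_Re_le_cmod[of z1] by linarith
  have nz2: "norm z2 \<ge> d" using a2 abs_Re_le_cmod[of z2] by linarith
  have big1: "norm z1 > R2" using nz1 d by linarith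
  have big2: "norm z2 > R2" using nz2 d by linarith
  define D1 where "D1 = \<phi> z1 - c / z1"
  define D2 where "D2 = \<phi> z2 - c / z2"
  have D1: "norm D1 \<le> A / (norm z1)^2" using decay[OF big1] by (simp add: D1_def)
  have D2: "norm D2 \<le> A / (norm z2)^2" using decay[OF big2] by (simp add: D2_def)
  have "A / (norm z1)^2 \<le> A / (d^2 + y^2)"
    using sq1 dy by (intro divide_left_mono sq1 A mult_pos_pos) auto
  then have D1': "norm D1 \<le> A / (d^2 + y^2)" using D1 by linarith
  have "A / (norm z2)^2 \<le> A / (d^2 + y^2)"
    using sq2 dy by (intro divide_left_mono sq2 A mult_pos_pos) auto
  then have D2': "norm D2 \<le> A / (d^2 + y^2)" using D2 by linarith
  have z10: "z1 \<noteq> 0" and z20: "z2 \<noteq> 0" using big1 big2 R2 by auto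
  have PP: "Pr \<phi> n w = c / z1 + c / z2 + D1 + D2"
    by (simp add: Pr_def D1_def D2_def z1_def z2_def)
  have p1: "(Re z1)^2 + y^2 > 0" using sq1 dy unfolding cmod_power2 Iz by linarith
  have p2: "(Re z2)^2 + y^2 > 0" using sq2 dy unfolding cmod_power2 Iz by linarith
  have Rec: "Re (c / z1 + c / z2) = Re c * (Re z1 / ((Re z1)^2 + y^2) + Re z2 / ((Re z2)^2 + y^2))"
    using creal Iz by (simp add: Re_divide power2_eq_square distrib_left)
  have nrm1: "norm z1 = sqrt ((Re z1)^2 + y^2)" and nrm2: "norm z2 = sqrt ((Re z2)^2 + y^2)"
    using Iz by (simp_all add: cmod_def)
  have "\<bar>Re z1 / ((Re z1)^2 + y^2) + Re z2 / ((Re z2)^2 + y^2)\<bar> \<le> \<bar>Re z1 + Re z2\<bar> / (norm z1 * norm z2)"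
    using re_pair_ineq[OF p1 p2] unfolding nrm1 nrm2 .
  also have "\<bar>Re z1 + Re z2\<bar> = 2 * \<bar>Re w\<bar>" unfolding Rz1 Rz2 by simp
  also have "norm z1 * norm z2 \<ge> d^2 + y^2"
  proof -
    have "(d^2 + y^2)^2 \<le> (norm z1)^2 * (norm z2)^2"
      using sq1 sq2 dy by (metis mult_mono' power2_eq_square less_imp_le)
    then have "(d^2+y^2)^2 \<le> (norm z1 * norm z2)^2" by (simp add: power_mult_distrib)
    then show ?thesis using dy by (metis abs_le_square_iff abs_of_pos norm_ge_zero zero_le_mult_iff abs_of_nonneg)
  qed
  then have "2 * \<bar>Re w\<bar> / (norm z1 * norm z2) \<le> 2 * W / (d^2 + y^2)"
    using W dy by (intro frac_le) auto
  finally have S: "\<bar>Re z1 / ((Re z1)^2 + y^2) + Re z2 / ((Re z2)^2 + y^2)\<bar> \<le> 2 * W / (d^2 + y^2)" .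
  have "\<bar>Re (Pr \<phi> n w)\<bar> \<le> \<bar>Re (c / z1 + c / z2)\<bar> + norm D1 + norm D2"
    unfolding PP using abs_Re_le_cmod[of D1] abs_Re_le_cmod[of D2] by simp
  also have "\<bar>Re (c / z1 + c / z2)\<bar> \<le> norm c * (2 * W / (d^2 + y^2))"
    unfolding Rec abs_mult using S abs_Re_le_cmod[of c] by (intro mult_mono) auto
  finally have "\<bar>Re (Pr \<phi> n w)\<bar> \<le> norm c * (2 * W / (d^2 + y^2)) + A / (d^2 + y^2) + A / (d^2 + y^2)"
    using D1' D2' by linarith
  also have "\<dots> = (2*W*norm c + 2*A) / (d^2 + y^2)"
  proof -
    have X: "d^2 + y^2 \<noteq> 0" using dy by linarith
    have "\<forall>X::real. X \<noteq> 0 \<longrightarrow> norm c * (2*W/X) + A/X + A/X = (2*W*norm c + 2*A)/X"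
      by (simp add: field_simps)
    then show ?thesis using X by blast
  qed
  finally show "\<bar>Re (Pr \<phi> n w)\<bar> \<le> (2*W*norm c + 2*A) / ((real n - W)^2 + (Im w)^2)"
    by (simp add: d_def y_def)
  have "c / z1 + c / z2 = 2 * c * w / (z1 * z2)" using z10 z20
    by (simp add: z1_def z2_def field_simps)
  then have "norm (c / z1 + c / z2) = 2 * norm c * norm w / (norm z1 * norm z2)"
    by (simp add: norm_mult norm_divide)
  also have "\<dots> \<le> 2 * norm c * norm w / d^2"
  proof (rule divide_left_mono)
    show "d^2 \<le> norm z1 * norm z2" using nz1 nz2 d
      by (metis mult_mono' power2_eq_square less_imp_le)
  qed (use d z10 z20 in auto)
  finally have C1: "norm (c / z1 + c / z2) \<le> 2 * norm c * norm w / d^2" .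
  have "A / (d^2 + y^2) \<le> A / d^2"
    using dy d by (intro divide_left_mono A mult_pos_pos) auto
  then have D1'': "norm D1 \<le> A / d^2" and D2'': "norm D2 \<le> A / d^2" using D1' D2' by linarith+
  have "norm (Pr \<phi> n w) \<le> norm (c / z1 + c / z2) + norm D1 + norm D2"
    unfolding PP by (rule order_trans[OF norm_triangle_ineq add_right_mono[OF norm_triangle_ineq]])
  also have "\<dots> \<le> 2 * norm c * norm w / d^2 + A / d^2 + A / d^2" using C1 D1'' D2'' by linarith
  also have "\<dots> = (2*norm c*norm w + 2*A) / d^2" by (simp add: add_divide_distrib)
  finally show "norm (Pr \<phi> n w) \<le> (2*norm c*norm w + 2*A) / (real n - W)^2" by (simp add: d_def)
qed

end



lemma sym_sum_Suc:
  fixes f :: "int \<Rightarrow> 'a::comm_monoid_add"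
  shows "(\<Sum>n\<in>{-int (Suc N)..int (Suc N)}. f n) = (\<Sum>n\<in>{-int N..int N}. f n) + (f (int (Suc N)) + f (- int (Suc N)))"
proof -
  have "{-int (Suc N)..int (Suc N)} = insert (int (Suc N)) (insert (- int (Suc N)) {-int N..int N})"
    by auto
  then show ?thesis by (simp add: algebra_simps)
qed

lemma sym_sum_split:
  fixes f :: "int \<Rightarrow> 'a::comm_monoid_add"
  shows "(\<Sum>n\<in>{-int (N0+m)..int (N0+m)}. f n) = (\<Sum>n\<in>{-int N0..int N0}. f n)
          + (\<Sum>k<m. f (int (N0+1+k)) + f (- int (N0+1+k)))"
proof (induction m)
  case 0 then show ?case by simp
next
  case (Suc m)
  have "(\<Sum>n\<in>{-int (N0+Suc m)..int (N0+Suc m)}. f n) = (\<Sum>n\<in>{-int (N0+m)..int (N0+m)}. f n)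
     + (f (int (Suc (N0+m))) + f (- int (Suc (N0+m))))"
    using sym_sum_Suc[of f "N0+m"] by simp
  also have "\<dots> = (\<Sum>n\<in>{-int N0..int N0}. f n) + (\<Sum>k<Suc m. f (int (N0+1+k)) + f (- int (N0+1+k)))"
    using Suc by (simp add: algebra_simps)
  finally show ?case .
qed

lemma summable_inv_sq: "summable (\<lambda>k. 1 / (real k + 1)^2)"
proof -
  have "summable (\<lambda>n. inverse (real n ^ 2))" by (rule inverse_power_summable) simp
  then have "summable (\<lambda>n. inverse (real (Suc n) ^ 2))" by (subst summable_Suc_iff)
  then show ?thesis by (simp add: divide_inverse add.commute)
qed

definition "S2 = (\<Sum>k. 1 / (real k + 1)^2)"

lemma summable_D_inv_sq: "summable (\<lambda>k. D / (real k + 1)^2)"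
  using summable_mult[OF summable_inv_sq, of D] by simp

lemma sum_bound_real:
  fixes f :: "nat \<Rightarrow> real"
  assumes "\<And>k. \<bar>f k\<bar> \<le> D / (real k + 1)^2"
  shows "summable f" "\<bar>suminf f\<bar> \<le> D * S2"
proof -
  have sa: "summable (\<lambda>k. norm (f k))"
    by (rule summable_comparison_test[OF _ summable_D_inv_sq[of D]]) (use assms in auto)
  then show "summable f" by (rule summable_norm_cancel)
  have "\<bar>suminf f\<bar> \<le> (\<Sum>k. \<bar>f k\<bar>)" using summable_norm[OF sa] by simp
  also have "\<dots> \<le> (\<Sum>k. D / (real k + 1)^2)"
    using sa summable_D_inv_sq assms by (intro suminf_le) auto
  also have "\<dots> = D * S2" unfolding S2_def using suminf_mult[OF summable_inv_sq, of D] by simp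
  finally show "\<bar>suminf f\<bar> \<le> D * S2" .
qed

lemma sum_bound_cpx:
  fixes f :: "nat \<Rightarrow> complex"
  assumes "\<And>k. norm (f k) \<le> D / (real k + 1)^2"
  shows "summable f"
proof -
  have sa: "summable (\<lambda>k. norm (f k))"
    by (rule summable_comparison_test[OF _ summable_D_inv_sq[of D]]) (use assms in auto)
  then show "summable f" by (rule summable_norm_cancel)
qed



locale msetup = lsetup +
  fixes F :: "hpt \<Rightarrow> real"
  assumes Fup: "\<And>z. Im z > 0 \<Longrightarrow> F (Up z) = Re (\<phi> z)"
    and Fcont: "\<forall>p. hvalid p \<longrightarrow> hcont_at F p"
begin

lemma open_out: "open (- Ic)"
proof -
  have "compact Ic" by (intro compact_continuous_image continuous_intros) auto
  then show ?thesis by (simp add: compact_imp_closed open_Compl)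
qed

lemma phi_cont: "w \<notin> Ic \<Longrightarrow> isCont \<phi> w"
  using holomorphic_on_imp_continuous_on[OF hol] open_out continuous_on_eq_continuous_at by blast

lemma Fval: assumes "hvalid q" "hpos q \<notin> Ic" shows "F q = Re (\<phi> (hpos q))"
proof (cases "\<exists>z. q = Up z")
  case True
  then obtain z where q: "q = Up z" by blast
  then show ?thesis using assms Fup by (simp add: hvalid_def)
next
  case False
  then have "\<And>z. q \<noteq> Up z" by blast
  moreover have "hcont_at F q" using Fcont assms by blast
  ultimately show ?thesis using F_boundary_value[OF assms(1), of F \<phi>] phi_cont[OF assms(2)] Fup by blast
qed

lemma Up_notin: "Im z \<noteq> 0 \<Longrightarrow> z \<notin> Ic" by auto

lemma Re_bounded: "\<exists>B. \<forall>z. Im z > 0 \<longrightarrow> \<bar>Re (\<phi> z)\<bar> \<le> B"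
proof -
  have "\<forall>\<^sub>F z in at_infinity. dist (\<phi> z) 0 < 1" using tendstoD[OF lim0] by simp
  then obtain R' where R': "\<And>z. R' \<le> norm z \<Longrightarrow> norm (\<phi> z) < 1"
    unfolding eventually_at_infinity by auto
  define K where "K = cball (0::complex) R'"
  have loc: "\<exists>d>0. \<exists>B. \<forall>z. Im z > 0 \<and> norm (z - z0) < d \<longrightarrow> \<bar>Re (\<phi> z)\<bar> \<le> B" for z0
  proof (cases "Im z0 > 0")
    case True
    then have "isCont \<phi> z0" using phi_cont Up_notin by simp
    then obtain d where d: "d > 0" "\<And>z. dist z z0 < d \<Longrightarrow> dist (\<phi> z) (\<phi> z0) < 1"
      unfolding continuous_at_eps_delta using zero_less_one by blast
    show ?thesis
    proof (rule exI[of _ d], intro conjI exI[of _ "norm (\<phi> z0) + 1"] allI impI d(1))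
      fix z assume "Im z > 0 \<and> norm (z - z0) < d"
      then have "dist (\<phi> z) (\<phi> z0) < 1" using d by (simp add: dist_norm)
      moreover have "norm (\<phi> z) - norm (\<phi> z0) \<le> norm (\<phi> z - \<phi> z0)" by (rule norm_triangle_ineq2)
      ultimately have "norm (\<phi> z) < norm (\<phi> z0) + 1" by (simp add: dist_norm)
      then show "\<bar>Re (\<phi> z)\<bar> \<le> norm (\<phi> z0) + 1" using abs_Re_le_cmod[of "\<phi> z"] by linarith
    qed
  next
    case False
    show ?thesis
    proof (cases "Im z0 = 0")
      case True
      then have z0: "of_real (Re z0) = z0" by (simp add: complex_eq_iff)
      obtain d B where dB: "d > 0" "\<forall>z. Im z > 0 \<and> cmod (z - of_real (Re z0)) < d \<longrightarrow> \<bar>F (Up z)\<bar> \<le> B"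
        using F_local_bound[OF Fcont, of "Re z0"] by blast
      show ?thesis
      proof (rule exI[of _ d], intro conjI exI[of _ B] allI impI dB(1))
        fix z assume z: "Im z > 0 \<and> norm (z - z0) < d"
        then have "cmod (z - of_real (Re z0)) < d" by (simp only: z0)
        then have "\<bar>F (Up z)\<bar> \<le> B" using dB z by blast
        then show "\<bar>Re (\<phi> z)\<bar> \<le> B" using Fup z by simp
      qed
    next
      case False
      with \<open>\<not> Im z0 > 0\<close> have neg: "Im z0 < 0" by simp
      show ?thesis
      proof (rule exI[of _ "- Im z0"], intro conjI exI[of _ 0] allI impI)
        show "- Im z0 > 0" using neg by simp
        fix z assume z: "Im z > 0 \<and> norm (z - z0) < - Im z0"
        have "\<bar>Im (z - z0)\<bar> \<le> norm (z - z0)" by (rule abs_Im_le_cmod)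
        then show "\<bar>Re (\<phi> z)\<bar> \<le> 0" using z neg by simp
      qed
    qed
  qed
  then have "\<forall>z0\<in>K. \<exists>d. d > 0 \<and> (\<exists>B. \<forall>z. Im z > 0 \<and> norm (z - z0) < d \<longrightarrow> \<bar>Re (\<phi> z)\<bar> \<le> B)" by blast
  from bchoice[OF this] obtain d where d: "\<forall>z0\<in>K. d z0 > 0 \<and> (\<exists>B. \<forall>z. Im z > 0 \<and> norm (z - z0) < d z0 \<longrightarrow> \<bar>Re (\<phi> z)\<bar> \<le> B)"
    by blast
  then have "\<forall>z0\<in>K. \<exists>B. \<forall>z. Im z > 0 \<and> norm (z - z0) < d z0 \<longrightarrow> \<bar>Re (\<phi> z)\<bar> \<le> B" by blast
  from bchoice[OF this] obtain Bf where Bf: "\<forall>z0\<in>K. \<forall>z. Im z > 0 \<and> norm (z - z0) < d z0 \<longrightarrow> \<bar>Re (\<phi> z)\<bar> \<le> Bf z0"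
    by blast
  have cpt: "compact K" by (simp add: K_def)
  have opn: "\<And>z0. z0 \<in> K \<Longrightarrow> open (ball z0 (d z0))" by simp
  have cover: "K \<subseteq> (\<Union>z0\<in>K. ball z0 (d z0))"
  proof
    fix x assume xK: "x \<in> K"
    then have "x \<in> ball x (d x)" using d by simp
    then show "x \<in> (\<Union>z0\<in>K. ball z0 (d z0))" using xK by blast
  qed
  obtain T where T: "T \<subseteq> K" "finite T" "K \<subseteq> (\<Union>z0\<in>T. ball z0 (d z0))"
    using compactE_image[OF cpt opn cover] by blast
  define B where "B = max 1 (Max (insert 0 (Bf ` T)))"
  show ?thesis
  proof (intro exI[of _ B] allI impI)
    fix z assume z: "Im z > 0"
    show "\<bar>Re (\<phi> z)\<bar> \<le> B"
    proof (cases "z \<in> K")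
      case True
      then obtain z0 where z0: "z0 \<in> T" "z \<in> ball z0 (d z0)" using T(3) by blast
      then have "norm (z - z0) < d z0" by (simp add: dist_norm norm_minus_commute)
      then have "\<bar>Re (\<phi> z)\<bar> \<le> Bf z0" using Bf z0(1) T(1) z by blast
      also have "Bf z0 \<le> Max (insert 0 (Bf ` T))" using z0(1) T(2) by (intro Max_ge) auto
      also have "\<dots> \<le> B" by (simp add: B_def)
      finally show ?thesis .
    next
      case False
      then have "R' \<le> norm z" by (simp add: K_def)
      then have "norm (\<phi> z) < 1" by (rule R')
      then show ?thesis using abs_Re_le_cmod[of "\<phi> z"] by (simp add: B_def)
    qed
  qed
qed

end



context msetup begin

lemma bound_ext:
  assumes bd: "\<And>w. Im w > 0 \<Longrightarrow> \<bar>Re (\<phi> w)\<bar> \<le> M"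
  shows "\<And>w. w \<notin> Ic \<Longrightarrow> \<bar>Re (\<phi> w)\<bar> \<le> M"
proof -
  fix w assume w: "w \<notin> Ic"
  consider "Im w > 0" | "Im w < 0" | "Im w = 0" by linarith
  then show "\<bar>Re (\<phi> w)\<bar> \<le> M"
  proof cases
    case 1 then show ?thesis by (rule bd)
  next
    case 2
    have cw: "cnj w \<notin> Ic" using 2 by (intro Up_notin) simp
    have "\<phi> (cnj (cnj w)) = cnj (\<phi> (cnj w))" by (rule real[OF cw])
    then have "Re (\<phi> w) = Re (\<phi> (cnj w))" by simp
    then show ?thesis using bd[of "cnj w"] 2 by simp
  next
    case 3
    define s where "s = (\<lambda>n::nat. w + \<i> * of_real (inverse (real (Suc n))))"
    have "(\<lambda>n. complex_of_real (inverse (real (Suc n)))) \<longlonglongrightarrow> of_real 0"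
      by (rule tendsto_of_real) (rule LIMSEQ_inverse_real_of_nat)
    then have "(\<lambda>n. w + \<i> * complex_of_real (inverse (real (Suc n)))) \<longlonglongrightarrow> w + \<i> * 0"
      by (intro tendsto_intros) simp_all
    then have sl: "s \<longlonglongrightarrow> w" by (simp add: s_def)
    have "(\<lambda>n. \<phi> (s n)) \<longlonglongrightarrow> \<phi> w" by (rule isCont_tendsto_compose[OF phi_cont[OF w] sl])
    then have "(\<lambda>n. Re (\<phi> (s n))) \<longlonglongrightarrow> Re (\<phi> w)" by (rule tendsto_Re)
    moreover have "\<forall>\<^sub>F n in sequentially. norm (Re (\<phi> (s n))) \<le> M"
      by (intro always_eventually allI) (use bd 3 in \<open>simp add: s_def\<close>)
    ultimately have "norm (Re (\<phi> w)) \<le> M" by (intro Lim_norm_ubound) auto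
    then show ?thesis by simp
  qed
qed

lemma psetup_M:
  assumes bd: "\<And>w. Im w > 0 \<Longrightarrow> \<bar>Re (\<phi> w)\<bar> \<le> M"
  shows "psetup \<phi> cc (16*M*R0^2) (2*R0)" "norm cc \<le> 4*M*R0"
proof -
  have bd': "\<And>w. w \<notin> Ic \<Longrightarrow> \<bar>Re (\<phi> w)\<bar> \<le> M" using bound_ext[OF bd] .
  have M0: "M \<ge> 0" using bd[of \<i>] by simp
  show "psetup \<phi> cc (16*M*R0^2) (2*R0)"
    by unfold_locales (use R0 M0 cc_real laurent_bounds(2)[OF bd'] in auto)
  show "norm cc \<le> 4*M*R0" using laurent_bounds(1)[OF bd'] .
qed

definition "M0 = (SOME B. \<forall>z. Im z > 0 \<longrightarrow> \<bar>Re (\<phi> z)\<bar> \<le> B)"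

lemma M0: "Im z > 0 \<Longrightarrow> \<bar>Re (\<phi> z)\<bar> \<le> M0"
  using someI_ex[OF Re_bounded] unfolding M0_def by blast

definition "A0 = 16*M0*R0^2"

lemma ps0: "psetup \<phi> cc A0 (2*R0)" unfolding A0_def by (rule psetup_M(1)[OF M0])

definition SG :: "hpt \<Rightarrow> nat \<Rightarrow> real" where
  "SG p N = (\<Sum>n\<in>{-int N..int N}. F (shb (-n) p))"

definition Gf :: "hpt \<Rightarrow> real" where "Gf p = lim (SG p)"

definition NN :: "real \<Rightarrow> nat" where "NN W = nat \<lceil>W + 2*R0\<rceil>"

lemma NN: "real (NN W) \<ge> W + 2*R0"
  unfolding NN_def by linarith

lemma far_notin: assumes "\<bar>Re w\<bar> \<le> W" "real n - W > 2*R0"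
  shows "w - of_nat n \<notin> Ic" "w + of_nat n \<notin> Ic"
proof -
  have "\<bar>Re (w - of_nat n)\<bar> > 2*R0" "\<bar>Re (w + of_nat n)\<bar> > 2*R0" using assms by auto
  then have "norm (w - of_nat n) > R0" "norm (w + of_nat n) > R0"
    using abs_Re_le_cmod[of "w - of_nat n"] abs_Re_le_cmod[of "w + of_nat n"] R0 by linarith+
  then show "w - of_nat n \<notin> Ic" "w + of_nat n \<notin> Ic" using big_notin by blast+
qed

lemma Fpair:
  assumes p: "hvalid p" and W: "\<bar>Re (hpos p)\<bar> \<le> W" and n: "real n - W > 2*R0"
  shows "F (shb (- int n) p) + F (shb (- (- int n)) p) = Re (Pr \<phi> n (hpos p))"
proof -
  have 1: "F (shb (- int n) p) = Re (\<phi> (hpos p - of_nat n))"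
    using Fval[of "shb (- int n) p"] p far_notin[OF W n] by simp
  have 2: "F (shb (- (- int n)) p) = Re (\<phi> (hpos p + of_nat n))"
    using Fval[of "shb (int n) p"] p far_notin[OF W n] by simp
  show ?thesis using 1 2 by (simp add: Pr_def)
qed

lemma SG_split:
  assumes p: "hvalid p" and W: "\<bar>Re (hpos p)\<bar> \<le> W" and W0: "W \<ge> 0"
  shows "SG p (NN W + m) = SG p (NN W) + (\<Sum>k<m. Re (Pr \<phi> (NN W+1+k) (hpos p)))"
proof -
  have "SG p (NN W + m) = SG p (NN W) + (\<Sum>k<m. F (shb (- int (NN W+1+k)) p) + F (shb (- (- int (NN W+1+k))) p))"
    unfolding SG_def by (rule sym_sum_split)
  also have "(\<Sum>k<m. F (shb (- int (NN W+1+k)) p) + F (shb (- (- int (NN W+1+k))) p))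
      = (\<Sum>k<m. Re (Pr \<phi> (NN W+1+k) (hpos p)))"
  proof (rule sum.cong[OF refl])
    fix k assume "k \<in> {..<m}"
    have "real (NN W + 1 + k) - W > 2*R0" using NN[of W] by simp
    then show "F (shb (- int (NN W+1+k)) p) + F (shb (- (- int (NN W+1+k))) p) = Re (Pr \<phi> (NN W+1+k) (hpos p))"
      by (rule Fpair[OF p W])
  qed
  finally show ?thesis .
qed

lemma Pr_term_bound:
  assumes ps: "psetup \<phi> cc A (2*R0)" and W: "\<bar>Re w\<bar> \<le> W" and W0: "W \<ge> 0"
  shows "\<bar>Re (Pr \<phi> (NN W+1+k) w)\<bar> \<le> (2*W*norm cc + 2*A) / ((real k + 1)^2 + (Im w)^2)"
    and "\<bar>Re (Pr \<phi> (NN W+1+k) w)\<bar> \<le> (2*W*norm cc + 2*A) / (real k + 1)^2"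
    and "norm (Pr \<phi> (NN W+1+k) w) \<le> (2*norm cc*norm w + 2*A) / (real k + 1)^2"
proof -
  interpret psetup \<phi> cc A "2*R0" by (rule ps)
  define n where "n = NN W + 1 + k"
  have n: "real n - W > 2*R0" using NN[of W] by (simp add: n_def)
  have nk: "real n - W \<ge> real k + 1" using NN[of W] R0 by (simp add: n_def)
  have sq: "(real k + 1)^2 \<le> (real n - W)^2" using nk by (intro power_mono) auto
  have D: "0 \<le> 2*W*norm cc + 2*A" using W0 A by simp
  have "\<bar>Re (Pr \<phi> n w)\<bar> \<le> (2*W*norm cc + 2*A) / ((real n - W)^2 + (Im w)^2)"
    by (rule pair_bounds(1)[OF W n])
  also have "\<dots> \<le> (2*W*norm cc + 2*A) / ((real k + 1)^2 + (Im w)^2)"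
    using sq D by (intro divide_left_mono mult_pos_pos add_pos_nonneg) auto
  finally show 1: "\<bar>Re (Pr \<phi> (NN W+1+k) w)\<bar> \<le> (2*W*norm cc + 2*A) / ((real k + 1)^2 + (Im w)^2)"
    by (simp add: n_def)
  also have "\<dots> \<le> (2*W*norm cc + 2*A) / (real k + 1)^2"
    using D by (intro divide_left_mono mult_pos_pos add_pos_nonneg) auto
  finally show "\<bar>Re (Pr \<phi> (NN W+1+k) w)\<bar> \<le> (2*W*norm cc + 2*A) / (real k + 1)^2" .
  have D2: "0 \<le> 2*norm cc*norm w + 2*A" using A by simp
  have "norm (Pr \<phi> n w) \<le> (2*norm cc*norm w + 2*A) / (real n - W)^2"
    by (rule pair_bounds(2)[OF W n])
  also have "\<dots> \<le> (2*norm cc*norm w + 2*A) / (real k + 1)^2"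
    using sq D2 by (intro divide_left_mono mult_pos_pos) auto
  finally show "norm (Pr \<phi> (NN W+1+k) w) \<le> (2*norm cc*norm w + 2*A) / (real k + 1)^2"
    by (simp add: n_def)
qed

lemma SG_lim:
  assumes p: "hvalid p" and W: "\<bar>Re (hpos p)\<bar> \<le> W" and W0: "W \<ge> 0"
  shows "summable (\<lambda>k. Re (Pr \<phi> (NN W+1+k) (hpos p)))"
    and "SG p \<longlonglongrightarrow> SG p (NN W) + (\<Sum>k. Re (Pr \<phi> (NN W+1+k) (hpos p)))"
    and "Gf p = SG p (NN W) + (\<Sum>k. Re (Pr \<phi> (NN W+1+k) (hpos p)))"
proof -
  show sm: "summable (\<lambda>k. Re (Pr \<phi> (NN W+1+k) (hpos p)))"
    by (rule sum_bound_real(1)) (rule Pr_term_bound(2)[OF ps0 W W0])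
  have "(\<lambda>m. SG p (NN W) + (\<Sum>k<m. Re (Pr \<phi> (NN W+1+k) (hpos p))))
      \<longlonglongrightarrow> SG p (NN W) + (\<Sum>k. Re (Pr \<phi> (NN W+1+k) (hpos p)))"
    by (intro tendsto_add tendsto_const summable_LIMSEQ sm)
  then have "(\<lambda>m. SG p (m + NN W)) \<longlonglongrightarrow> SG p (NN W) + (\<Sum>k. Re (Pr \<phi> (NN W+1+k) (hpos p)))"
    using SG_split[OF p W W0] by (simp add: add.commute)
  then show l: "SG p \<longlonglongrightarrow> SG p (NN W) + (\<Sum>k. Re (Pr \<phi> (NN W+1+k) (hpos p)))"
    by (rule LIMSEQ_offset)
  then show "Gf p = SG p (NN W) + (\<Sum>k. Re (Pr \<phi> (NN W+1+k) (hpos p)))"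
    unfolding Gf_def by (rule limI)
qed

lemma SG_conv: "hvalid p \<Longrightarrow> SG p \<longlonglongrightarrow> Gf p"
  using SG_lim(2,3)[of p "\<bar>Re (hpos p)\<bar>"] by simp

lemma sumZ_split:
  assumes W: "\<bar>Re z\<bar> \<le> W"
  shows "sumZ_part \<phi> z (NN W + m) = sumZ_part \<phi> z (NN W) + (\<Sum>k<m. Pr \<phi> (NN W+1+k) z)"
proof -
  have "sumZ_part \<phi> z (NN W + m) = sumZ_part \<phi> z (NN W) +
     (\<Sum>k<m. \<phi> (z - of_int (int (NN W+1+k))) + \<phi> (z - of_int (- int (NN W+1+k))))"
    unfolding sumZ_part_def by (rule sym_sum_split)
  moreover have eq: "\<And>n::nat. \<phi> (z - of_int (int n)) + \<phi> (z - of_int (- int n)) = Pr \<phi> n z"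
    by (simp add: Pr_def)
  ultimately show ?thesis by (simp only: eq)
qed

lemma sumZ_conv:
  assumes W: "\<bar>Re z\<bar> \<le> W" and W0: "W \<ge> 0"
  shows "sumZ_part \<phi> z \<longlonglongrightarrow> sumZ_part \<phi> z (NN W) + (\<Sum>k. Pr \<phi> (NN W+1+k) z)"
proof -
  have sm: "summable (\<lambda>k. Pr \<phi> (NN W+1+k) z)"
    by (rule sum_bound_cpx) (rule Pr_term_bound(3)[OF ps0 W W0])
  have "(\<lambda>m. sumZ_part \<phi> z (NN W) + (\<Sum>k<m. Pr \<phi> (NN W+1+k) z))
      \<longlonglongrightarrow> sumZ_part \<phi> z (NN W) + (\<Sum>k. Pr \<phi> (NN W+1+k) z)"
    by (intro tendsto_add tendsto_const summable_LIMSEQ sm)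
  then have "(\<lambda>m. sumZ_part \<phi> z (m + NN W)) \<longlonglongrightarrow> sumZ_part \<phi> z (NN W) + (\<Sum>k. Pr \<phi> (NN W+1+k) z)"
    using sumZ_split[OF W] by (simp add: add.commute)
  then show ?thesis by (rule LIMSEQ_offset)
qed

lemma sumZ_convergent: "convergent (sumZ_part \<phi> z)"
  using sumZ_conv[of z "\<bar>Re z\<bar>"] by (auto simp: convergent_def)

lemma G_Up: assumes "Im z > 0" shows "Gf (Up z) = Re (sumZ \<phi> z)"
proof -
  have t: "F (shb (-n) (Up z)) = Re (\<phi> (z - of_int n))" for n
  proof -
    have "shb (-n) (Up z) = Up (z - of_int n)" by simp
    moreover have "Im (z - of_int n) > 0" using assms by simp
    ultimately show ?thesis using Fup by simp
  qed
  have "SG (Up z) N = Re (sumZ_part \<phi> z N)" for N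
    unfolding SG_def sumZ_part_def Re_sum t ..
  moreover have "sumZ_part \<phi> z \<longlonglongrightarrow> sumZ \<phi> z"
    using sumZ_convergent unfolding sumZ_def by (simp add: convergent_LIMSEQ_iff)
  ultimately have "(\<lambda>N. Re (sumZ_part \<phi> z N)) \<longlonglongrightarrow> Re (sumZ \<phi> z)" "SG (Up z) = (\<lambda>N. Re (sumZ_part \<phi> z N))"
    by (auto intro: tendsto_Re)
  then have "SG (Up z) \<longlonglongrightarrow> Re (sumZ \<phi> z)" by simp
  then show ?thesis unfolding Gf_def by (rule limI)
qed

end



lemma shift_sum_int:
  fixes f :: "int \<Rightarrow> 'a::comm_monoid_add"
  shows "(\<Sum>n\<in>{-int N..int N}. f (n - 1)) + f (int N) = (\<Sum>n\<in>{-int N..int N}. f n) + f (- int N - 1)"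
proof -
  have r: "(\<Sum>n\<in>{-int N..int N}. f (n - 1)) = (\<Sum>m\<in>{-int N - 1..int N - 1}. f m)"
    by (rule sum.reindex_bij_witness[of _ "\<lambda>m. m + 1" "\<lambda>n. n - 1"]) auto
  have s1: "{-int N - 1..int N} = insert (int N) {-int N - 1..int N - 1}" by auto
  have s2: "{-int N - 1..int N} = insert (- int N - 1) {-int N..int N}" by auto
  have "(\<Sum>m\<in>{-int N - 1..int N - 1}. f m) + f (int N) = (\<Sum>m\<in>{-int N - 1..int N}. f m)"
    unfolding s1 by (simp add: add.commute)
  also have "\<dots> = (\<Sum>n\<in>{-int N..int N}. f n) + f (- int N - 1)"
    unfolding s2 by (simp add: add.commute)
  finally show ?thesis using r by simp
qed

context msetup begin

lemma F_far_lim: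
  assumes p: "hvalid p"
  shows "(\<lambda>N. F (shb (int N + 1) p)) \<longlonglongrightarrow> 0" "(\<lambda>N. F (shb (- int N) p)) \<longlonglongrightarrow> 0"
proof -
  have key: "\<exists>N0. \<forall>N\<ge>N0. \<forall>k. \<bar>k\<bar> \<ge> int N \<longrightarrow> \<bar>F (shb k p)\<bar> < r" if r: "r > 0" for r
  proof -
    have "\<forall>\<^sub>F x in at_infinity. dist (\<phi> x) 0 < r" using tendstoD[OF lim0 r] .
    then obtain R' where R': "\<And>x. R' \<le> norm x \<Longrightarrow> norm (\<phi> x) < r"
      unfolding eventually_at_infinity by auto
    define N0 where "N0 = nat \<lceil>\<bar>R'\<bar> + R0 + norm (hpos p)\<rceil> + 1"
    show ?thesis
    proof (intro exI[of _ N0] allI impI)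
      fix N :: nat and k :: int assume N: "N0 \<le> N" and k: "int N \<le> \<bar>k\<bar>"
      have "real_of_int \<bar>k\<bar> \<ge> real N" using k by linarith
      moreover have "real N \<ge> \<bar>R'\<bar> + R0 + norm (hpos p) + 1" using N unfolding N0_def by linarith
      ultimately have kb: "\<bar>real_of_int k\<bar> \<ge> \<bar>R'\<bar> + R0 + norm (hpos p) + 1" by simp
      have "norm (of_int k :: complex) \<le> norm (hpos p + of_int k) + norm (hpos p)"
        by (metis add.commute add_diff_cancel_right' norm_triangle_ineq4 norm_minus_commute diff_add_cancel norm_diff_ineq order_trans norm_triangle_sub)
      then have nb: "norm (hpos p + of_int k) \<ge> \<bar>R'\<bar> + R0 + 1" using kb by simp
      then have "norm (hpos p + of_int k) > R0" by linarith
      then have "hpos (shb k p) \<notin> Ic" using big_notin by simp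
      then have "F (shb k p) = Re (\<phi> (hpos p + of_int k))" using Fval[of "shb k p"] p by simp
      moreover have "norm (\<phi> (hpos p + of_int k)) < r" by (intro R') (use nb R0 abs_ge_self[of R'] in linarith)
      ultimately show "\<bar>F (shb k p)\<bar> < r" using abs_Re_le_cmod by (metis le_less_trans)
    qed
  qed
  show "(\<lambda>N. F (shb (int N + 1) p)) \<longlonglongrightarrow> 0"
  proof (rule tendstoI)
    fix r :: real assume "r > 0"
    then obtain N0 where N0: "\<forall>N\<ge>N0. \<forall>k. \<bar>k\<bar> \<ge> int N \<longrightarrow> \<bar>F (shb k p)\<bar> < r" using key by blast
    show "\<forall>\<^sub>F N in sequentially. dist (F (shb (int N + 1) p)) 0 < r"
      unfolding eventually_sequentially using N0 by (intro exI[of _ N0]) auto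
  qed
  show "(\<lambda>N. F (shb (- int N) p)) \<longlonglongrightarrow> 0"
  proof (rule tendstoI)
    fix r :: real assume "r > 0"
    then obtain N0 where N0: "\<forall>N\<ge>N0. \<forall>k. \<bar>k\<bar> \<ge> int N \<longrightarrow> \<bar>F (shb k p)\<bar> < r" using key by blast
    show "\<forall>\<^sub>F N in sequentially. dist (F (shb (- int N) p)) 0 < r"
      unfolding eventually_sequentially using N0 by (intro exI[of _ N0]) auto
  qed
qed

lemma G_shift1: assumes p: "hvalid p" shows "Gf (shb 1 p) = Gf p"
proof -
  define f where "f = (\<lambda>m. F (shb (-m) p))"
  have e: "SG (shb 1 p) N = SG p N + F (shb (int N + 1) p) - F (shb (- int N) p)" for N
  proof -
    have "SG (shb 1 p) N = (\<Sum>n\<in>{-int N..int N}. f (n - 1))"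
      unfolding SG_def f_def by (intro sum.cong refl) (simp add: algebra_simps)
    moreover have "SG p N = (\<Sum>n\<in>{-int N..int N}. f n)" unfolding SG_def f_def ..
    moreover have "f (int N) = F (shb (- int N) p)" "f (- int N - 1) = F (shb (int N + 1) p)"
      by (simp_all add: f_def add.commute)
    ultimately show ?thesis using shift_sum_int[of f N] by (simp add: algebra_simps)
  qed
  have "(\<lambda>N. SG p N + F (shb (int N + 1) p) - F (shb (- int N) p)) \<longlonglongrightarrow> Gf p + 0 - 0"
    by (intro tendsto_intros SG_conv p F_far_lim)
  then have "SG (shb 1 p) \<longlonglongrightarrow> Gf p" unfolding e by simp
  then show ?thesis unfolding Gf_def by (rule limI)
qed

lemma G_shift: assumes p: "hvalid p" shows "Gf (shb k p) = Gf p"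
proof (induction k rule: int_induct[where k=0])
  case base then show ?case by simp
next
  case (step1 i)
  have "Gf (shb (i+1) p) = Gf (shb 1 (shb i p))" by (simp add: add.commute)
  also have "\<dots> = Gf (shb i p)" using p by (intro G_shift1) simp
  finally show ?case using step1 by simp
next
  case (step2 i)
  have "Gf (shb i p) = Gf (shb 1 (shb (i - 1) p))" by simp
  also have "\<dots> = Gf (shb (i - 1) p)" using p by (intro G_shift1) simp
  finally show ?case using step2 by simp
qed

end



context msetup begin

definition HH :: "real \<Rightarrow> complex \<Rightarrow> real" where
  "HH W w = (\<Sum>k. Re (Pr \<phi> (NN W+1+k) w))"

lemma term_cont:
  assumes W: "\<bar>Re w\<bar> \<le> W" and W0: "W \<ge> 0"
  shows "isCont (\<lambda>w. Re (Pr \<phi> (NN W+1+k) w)) w"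
proof -
  define n where "n = NN W + 1 + k"
  have n: "real n - W > 2*R0" using NN[of W] by (simp add: n_def)
  have c1: "isCont (\<lambda>w. \<phi> (w - of_nat n)) w"
    by (rule isCont_o2[where f="\<lambda>w. w - of_nat n", OF _ phi_cont[OF far_notin(1)[OF W n]]]) (intro continuous_intros)
  have c2: "isCont (\<lambda>w. \<phi> (w + of_nat n)) w"
    by (rule isCont_o2[where f="\<lambda>w. w + of_nat n", OF _ phi_cont[OF far_notin(2)[OF W n]]]) (intro continuous_intros)
  show ?thesis unfolding Pr_def n_def[symmetric] by (intro isCont_Re isCont_add c1 c2)
qed

lemma HH_cont:
  assumes W0: "W \<ge> 0"
  shows "continuous_on {w. \<bar>Re w\<bar> \<le> W} (HH W)"
proof -
  define S where "S = {w::complex. \<bar>Re w\<bar> \<le> W}"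
  define D where "D = 2*W*norm cc + 2*A0"
  have ul: "uniform_limit S (\<lambda>n w. \<Sum>k<n. Re (Pr \<phi> (NN W+1+k) w)) (\<lambda>w. \<Sum>k. Re (Pr \<phi> (NN W+1+k) w)) sequentially"
  proof (rule Weierstrass_m_test)
    show "summable (\<lambda>k. D / (real k + 1)^2)" by (rule summable_D_inv_sq)
    fix k w assume "w \<in> S"
    then have "\<bar>Re w\<bar> \<le> W" by (simp add: S_def)
    then show "norm (Re (Pr \<phi> (NN W+1+k) w)) \<le> D / (real k + 1)^2"
      using Pr_term_bound(2)[OF ps0 _ W0] unfolding D_def by simp
  qed
  have "\<forall>\<^sub>F n in sequentially. continuous_on S (\<lambda>w. \<Sum>k<n. Re (Pr \<phi> (NN W+1+k) w))"
  proof (intro always_eventually allI continuous_on_sum ballI continuous_at_imp_continuous_on)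
    fix n k w assume "w \<in> S"
    then show "isCont (\<lambda>w. Re (Pr \<phi> (NN W+1+k) w)) w" using term_cont W0 by (simp add: S_def)
  qed
  then have "continuous_on S (\<lambda>w. \<Sum>k. Re (Pr \<phi> (NN W+1+k) w))"
    using uniform_limit_theorem[OF _ ul] by simp
  then show ?thesis by (simp add: S_def HH_def)
qed

lemma G_cont: assumes p0: "hvalid p0" shows "hcont_at Gf p0"
proof -
  define W where "W = \<bar>Re (hpos p0)\<bar> + 1"
  have W0: "W \<ge> 0" by (simp add: W_def)
  define N where "N = NN W"
  have repr: "Gf q = SG q N + HH W (hpos q)" if "hvalid q" "\<bar>Re (hpos q)\<bar> \<le> W" for q
    using SG_lim(3)[OF that W0] by (simp add: N_def HH_def)
  have Wq: "\<bar>Re (hpos q)\<bar> \<le> W" if "cmod (hpos q - hpos p0) < 1" for q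
  proof -
    have "\<bar>Re (hpos q - hpos p0)\<bar> < 1" using that abs_Re_le_cmod le_less_trans by blast
    then show ?thesis unfolding W_def by simp
  qed
  have h1: "hcont_at (\<lambda>q. SG q N) p0"
    unfolding SG_def by (intro hcont_at_sum finite_atLeastAtMost_int hcont_at_shb[OF Fcont p0])
  have h2: "hcont_at (\<lambda>q. HH W (hpos q)) p0"
  proof (rule hcont_at_pos, intro allI impI)
    fix r :: real assume r: "r > 0"
    have inS: "hpos p0 \<in> {w. \<bar>Re w\<bar> \<le> W}" by (simp add: W_def)
    from HH_cont[OF W0, unfolded continuous_on_iff, rule_format, OF inS r]
    obtain d where d: "d > 0" "\<forall>x'\<in>{w. \<bar>Re w\<bar> \<le> W}. dist x' (hpos p0) < d \<longrightarrow> dist (HH W x') (HH W (hpos p0)) < r"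
      by blast
    show "\<exists>d>0. \<forall>w. Im w \<ge> 0 \<and> cmod (w - hpos p0) < d \<longrightarrow> \<bar>HH W w - HH W (hpos p0)\<bar> < r"
    proof (intro exI[of _ "min d 1"] conjI allI impI)
      show "min d 1 > 0" using d by simp
      fix w assume w: "Im w \<ge> 0 \<and> cmod (w - hpos p0) < min d 1"
      have "\<bar>Re (w - hpos p0)\<bar> < 1" using w abs_Re_le_cmod[of "w - hpos p0"] by linarith
      then have "w \<in> {w. \<bar>Re w\<bar> \<le> W}" by (simp add: W_def)
      moreover have "dist w (hpos p0) < d" using w by (simp add: dist_norm)
      ultimately show "\<bar>HH W w - HH W (hpos p0)\<bar> < r" using d by (simp add: dist_real_def)
    qed
  qed
  have h: "hcont_at (\<lambda>q. SG q N + HH W (hpos q)) p0" by (rule hcont_at_add[OF h1 h2])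
  show ?thesis
  proof (rule hcont_at_cong[OF h zero_less_one])
    fix q assume q: "q \<in> hnbhd p0 1"
    then have "hvalid q" by (rule hnbhd_valid)
    moreover have "\<bar>Re (hpos q)\<bar> \<le> W" using Wq hnbhd_pos[OF q] by simp
    ultimately show "Gf q = SG q N + HH W (hpos q)" by (rule repr)
  next
    show "Gf p0 = SG p0 N + HH W (hpos p0)" using repr[OF p0] by (simp add: W_def)
  qed
qed

end



definition Cconst :: "real \<Rightarrow> real" where
  "Cconst R0 = real (2 * nat \<lceil>1/2 + 2*R0\<rceil> + 1) + (4*R0 + 32*R0^2) * S2"

lemma S2_nonneg: "S2 \<ge> 0"
  unfolding S2_def by (intro suminf_nonneg summable_inv_sq) simp

lemma suminf_abs_le:
  fixes f g :: "nat \<Rightarrow> real"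
  assumes "\<And>k. \<bar>f k\<bar> \<le> g k" "summable f" "summable g"
  shows "\<bar>suminf f\<bar> \<le> suminf g"
proof -
  have "suminf f \<le> suminf g" using assms by (intro suminf_le) (auto simp: abs_le_iff)
  moreover have "suminf (\<lambda>k. - g k) \<le> suminf f"
  proof (rule suminf_le)
    show "- g k \<le> f k" for k using assms(1)[of k] by linarith
  qed (use assms in \<open>auto intro: summable_minus\<close>)
  moreover have "suminf (\<lambda>k. - g k) = - suminf g" using assms(3) by (rule suminf_minus)
  ultimately show ?thesis by linarith
qed

lemma inv_sq_le:
  fixes D y :: real assumes D: "D \<ge> 0"
  shows "0 \<le> D / ((real k + 1)^2 + y^2)" "D / ((real k + 1)^2 + y^2) \<le> D / (real k + 1)^2"
proof -
  have pk: "(real k + 1)^2 > 0" by (simp add: add_pos_nonneg)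
  have pk2: "(real k + 1)^2 + y^2 > 0" using pk by (simp add: add_pos_nonneg)
  show "0 \<le> D / ((real k + 1)^2 + y^2)" using D pk2 by simp
  show "D / ((real k + 1)^2 + y^2) \<le> D / (real k + 1)^2"
    using D pk pk2 by (intro divide_left_mono mult_pos_pos) auto
qed

context msetup begin

lemma reduce:
  assumes z: "Im z > 0"
  shows "\<exists>z'. Im z' = Im z \<and> \<bar>Re z'\<bar> \<le> 1/2 \<and> Gf (Up z) = Gf (Up z')"
proof -
  define k where "k = \<lfloor>Re z + 1/2\<rfloor>"
  define z' where "z' = z - of_int k"
  have "real_of_int k \<le> Re z + 1/2" "Re z + 1/2 < real_of_int k + 1" unfolding k_def by linarith+
  moreover have "Re z' = Re z - real_of_int k" by (simp add: z'_def)
  ultimately have "\<bar>Re z'\<bar> \<le> 1/2" unfolding abs_le_iff by linarith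
  moreover have "Im z' = Im z" by (simp add: z'_def)
  moreover have "Up z = shb k (Up z')" by (simp add: z'_def)
  then have "Gf (Up z) = Gf (Up z')" using G_shift[of "Up z'" k] z by (simp add: hvalid_def z'_def)
  ultimately show ?thesis by blast
qed

lemma SG_Up: "Im z > 0 \<Longrightarrow> SG (Up z) N = (\<Sum>n\<in>{-int N..int N}. Re (\<phi> (z - of_int n)))"
proof -
  assume z: "Im z > 0"
  have t: "F (shb (-n) (Up z)) = Re (\<phi> (z - of_int n))" for n
  proof -
    have "shb (-n) (Up z) = Up (z - of_int n)" by simp
    moreover have "Im (z - of_int n) > 0" using z by simp
    ultimately show ?thesis using Fup by simp
  qed
  show ?thesis unfolding SG_def t ..
qed

lemma SG_bound:
  assumes z: "Im z > 0" and E: "\<And>n. \<bar>Re (\<phi> (z - of_int n))\<bar> \<le> E"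
  shows "\<bar>SG (Up z) N\<bar> \<le> real (2*N+1) * E"
proof -
  have "\<bar>SG (Up z) N\<bar> \<le> (\<Sum>n\<in>{-int N..int N}. \<bar>Re (\<phi> (z - of_int n))\<bar>)"
    unfolding SG_Up[OF z] by (rule sum_abs)
  also have "\<dots> \<le> of_nat (card {-int N..int N}) * E" by (rule sum_bounded_above) (rule E)
  also have "card {-int N..int N} = 2*N+1" by simp
  finally show ?thesis by simp
qed

lemma CM_bound:
  assumes bd: "\<And>w. Im w > 0 \<Longrightarrow> \<bar>Re (\<phi> w)\<bar> \<le> M" and z: "Im z > 0"
  shows "\<bar>Gf (Up z)\<bar> \<le> Cconst R0 * M"
proof -
  obtain z' where z': "Im z' = Im z" "\<bar>Re z'\<bar> \<le> 1/2" "Gf (Up z) = Gf (Up z')" using reduce[OF z] by blast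
  have z'p: "Im z' > 0" using z' z by simp
  have ps: "psetup \<phi> cc (16*M*R0^2) (2*R0)" and ccb: "norm cc \<le> 4*M*R0" using psetup_M[OF bd] by auto
  have M0: "M \<ge> 0" using bd[of \<i>] by simp
  define W :: real where "W = 1/2"
  have W: "\<bar>Re (hpos (Up z'))\<bar> \<le> W" "W \<ge> 0" using z' by (auto simp: W_def)
  have val: "hvalid (Up z')" using z'p by (simp add: hvalid_def)
  have G: "Gf (Up z') = SG (Up z') (NN W) + (\<Sum>k. Re (Pr \<phi> (NN W+1+k) z'))"
    using SG_lim(3)[OF val W] by simp
  have s1: "\<bar>SG (Up z') (NN W)\<bar> \<le> real (2 * NN W + 1) * M"
    by (rule SG_bound[OF z'p]) (use bd z'p in simp)
  define D where "D = 2*W*norm cc + 2*(16*M*R0^2)"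
  have s2: "\<bar>(\<Sum>k. Re (Pr \<phi> (NN W+1+k) z'))\<bar> \<le> D * S2"
    by (rule sum_bound_real(2)) (use Pr_term_bound(2)[OF ps, of z' W] W(2) z'(2) in \<open>simp add: D_def W_def\<close>)
  have "D \<le> (4*R0 + 32*R0^2) * M" using ccb by (simp add: D_def W_def algebra_simps)
  then have "D * S2 \<le> (4*R0 + 32*R0^2) * M * S2" using S2_nonneg by (rule mult_right_mono)
  moreover have "NN W = nat \<lceil>1/2 + 2*R0\<rceil>" by (simp add: NN_def W_def)
  moreover have "\<bar>Gf (Up z')\<bar> \<le> \<bar>SG (Up z') (NN W)\<bar> + \<bar>(\<Sum>k. Re (Pr \<phi> (NN W+1+k) z'))\<bar>"
    unfolding G by (rule abs_triangle_ineq)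
  ultimately have "\<bar>Gf (Up z')\<bar> \<le> real (2 * nat \<lceil>1/2 + 2*R0\<rceil> + 1) * M + (4*R0 + 32*R0^2) * M * S2"
    using s1 s2 by simp
  also have "\<dots> = Cconst R0 * M" by (simp add: Cconst_def algebra_simps)
  finally show ?thesis using z' by simp
qed

lemma hfun_lim:
  fixes D :: real assumes D: "D \<ge> 0"
  shows "((\<lambda>y. \<Sum>k. D / ((real k + 1)^2 + y^2)) \<longlongrightarrow> 0) at_top"
proof (rule swap_uniform_limit'[where f="\<lambda>n y. \<Sum>k<n. D / ((real k + 1)^2 + y^2)" and g="\<lambda>n. 0" and F=sequentially and S=UNIV])
  show "\<forall>\<^sub>F n in sequentially. ((\<lambda>y. \<Sum>k<n. D / ((real k + 1)^2 + y^2)) \<longlongrightarrow> 0) at_top"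
  proof (intro always_eventually allI)
    fix n
    have "((\<lambda>y. \<Sum>k<n. D / ((real k + 1)^2 + y^2)) \<longlongrightarrow> (\<Sum>k<n. 0)) at_top"
    proof (intro tendsto_sum)
      fix k
      have "filterlim (\<lambda>y::real. y^2) at_top at_top" by (rule filterlim_pow_at_top[OF _ filterlim_ident]) simp
      then have "filterlim (\<lambda>y::real. (real k + 1)^2 + y^2) at_top at_top"
        by (rule filterlim_tendsto_add_at_top[OF tendsto_const])
      then have "filterlim (\<lambda>y::real. (real k + 1)^2 + y^2) at_infinity at_top"
        by (rule filterlim_at_top_imp_at_infinity)
      then show "((\<lambda>y. D / ((real k + 1)^2 + y^2)) \<longlongrightarrow> 0) at_top"
        by (rule tendsto_divide_0[OF tendsto_const])
    qed
    then show "((\<lambda>y. \<Sum>k<n. D / ((real k + 1)^2 + y^2)) \<longlongrightarrow> 0) at_top" by simp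
  qed
  show "((\<lambda>n. 0::real) \<longlongrightarrow> 0) sequentially" by simp
  show "uniform_limit UNIV (\<lambda>n y. \<Sum>k<n. D / ((real k + 1)^2 + y^2)) (\<lambda>y. \<Sum>k. D / ((real k + 1)^2 + y^2)) sequentially"
  proof (rule Weierstrass_m_test)
    show "summable (\<lambda>k. D / (real k + 1)^2)" by (rule summable_D_inv_sq)
    fix k and y :: real
    show "norm (D / ((real k + 1)^2 + y^2)) \<le> D / (real k + 1)^2"
      using inv_sq_le[OF D, of k y] D by simp
  qed
qed auto

lemma lim_top: "r > 0 \<Longrightarrow> \<exists>Y. \<forall>z. Im z > Y \<longrightarrow> \<bar>Gf (Up z)\<bar> < r"
proof -
  assume r: "r > 0"
  define W :: real where "W = 1/2"
  define N where "N = NN W"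
  define D where "D = 2*W*norm cc + 2*A0"
  have A0: "A0 \<ge> 0" using psetup.A[OF ps0] .
  have D: "D \<ge> 0" using A0 by (simp add: D_def W_def)
  have r2: "r/2 > 0" using r by simp
  have "\<forall>\<^sub>F y in at_top. dist (\<Sum>k. D / ((real k + 1)^2 + y^2)) 0 < r/2"
    by (rule tendstoD[OF hfun_lim[OF D] r2])
  then obtain Y1 where Y1: "\<And>y. y \<ge> Y1 \<Longrightarrow> \<bar>\<Sum>k. D / ((real k + 1)^2 + y^2)\<bar> < r/2"
    unfolding eventually_at_top_linorder by auto
  define e where "e = r / (2 * real (2*N+1))"
  have e: "e > 0" using r by (simp add: e_def)
  have "\<forall>\<^sub>F x in at_infinity. dist (\<phi> x) 0 < e" using tendstoD[OF lim0 e] .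
  then obtain R' where R': "\<And>x. R' \<le> norm x \<Longrightarrow> norm (\<phi> x) < e"
    unfolding eventually_at_infinity by auto
  show ?thesis
  proof (intro exI[of _ "max (max Y1 R') 0"] allI impI)
    fix z assume zY: "Im z > max (max Y1 R') 0"
    then have z: "Im z > 0" by simp
    obtain z' where z': "Im z' = Im z" "\<bar>Re z'\<bar> \<le> 1/2" "Gf (Up z) = Gf (Up z')" using reduce[OF z] by blast
    have z'p: "Im z' > 0" using z' z by simp
    have W: "\<bar>Re (hpos (Up z'))\<bar> \<le> W" "W \<ge> 0" using z' by (auto simp: W_def)
    have val: "hvalid (Up z')" using z'p by (simp add: hvalid_def)
    have G: "Gf (Up z') = SG (Up z') N + (\<Sum>k. Re (Pr \<phi> (NN W+1+k) z'))"
      using SG_lim(3)[OF val W] by (simp add: N_def)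
    have "\<bar>Re (\<phi> (z' - of_int n))\<bar> \<le> e" for n
    proof -
      have "norm (z' - of_int n) \<ge> \<bar>Im (z' - of_int n)\<bar>" by (rule abs_Im_le_cmod)
      then have "norm (z' - of_int n) \<ge> R'" using z' zY by simp
      then have "norm (\<phi> (z' - of_int n)) < e" by (rule R')
      then show ?thesis using abs_Re_le_cmod[of "\<phi> (z' - of_int n)"] by linarith
    qed
    then have s1: "\<bar>SG (Up z') N\<bar> \<le> real (2*N+1) * e" by (rule SG_bound[OF z'p])
    have "\<forall>x::real. x > 0 \<longrightarrow> x * (r / (2 * x)) = r/2" by (simp add: field_simps)
    moreover have "real (2*N+1) > 0" by simp
    ultimately have "real (2*N+1) * e = r/2" unfolding e_def by blast
    then have s1': "\<bar>SG (Up z') N\<bar> \<le> r/2" using s1 by simp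
    have tb: "\<bar>Re (Pr \<phi> (NN W+1+k) z')\<bar> \<le> D / ((real k + 1)^2 + (Im z')^2)" for k
      using Pr_term_bound(1)[OF ps0, of z' W k] W by (simp add: D_def)
    have sm1: "summable (\<lambda>k. Re (Pr \<phi> (NN W+1+k) z'))" using SG_lim(1)[OF val W] by simp
    have sm2: "summable (\<lambda>k. D / ((real k + 1)^2 + (Im z')^2))"
    proof (rule summable_comparison_test[OF _ summable_D_inv_sq[of D]])
      show "\<exists>N. \<forall>n\<ge>N. norm (D / ((real n + 1)^2 + (Im z')^2)) \<le> D / (real n + 1)^2"
      proof (intro exI allI impI)
        fix n :: nat
        show "norm (D / ((real n + 1)^2 + (Im z')^2)) \<le> D / (real n + 1)^2"
          using inv_sq_le[OF D, of n "Im z'"] D by simp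
      qed
    qed
    have s2: "\<bar>\<Sum>k. Re (Pr \<phi> (NN W+1+k) z')\<bar> \<le> (\<Sum>k. D / ((real k + 1)^2 + (Im z')^2))"
      by (rule suminf_abs_le[OF tb sm1 sm2])
    have "Im z' \<ge> Y1" using z' zY by simp
    then have s3: "\<bar>\<Sum>k. D / ((real k + 1)^2 + (Im z')^2)\<bar> < r/2" by (rule Y1)
    have "\<bar>Gf (Up z')\<bar> \<le> \<bar>SG (Up z') N\<bar> + \<bar>(\<Sum>k. Re (Pr \<phi> (NN W+1+k) z'))\<bar>"
      unfolding G by (rule abs_triangle_ineq)
    then have "\<bar>Gf (Up z')\<bar> < r" using s1' s2 s3 by linarith
    then show "\<bar>Gf (Up z)\<bar> < r" using z' by simp
  qed
qed

end



theorem proposition5p7: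
  fixes a b :: real
  assumes "a < b"
  shows "\<exists>C::real. \<forall>\<phi>. \<phi> \<in> ChatR a b \<longrightarrow>
     (\<forall>z. Im z > 0 \<longrightarrow> convergent (sumZ_part \<phi> z))
   \<and> (\<exists>B. \<forall>z. Im z > 0 \<longrightarrow> \<bar>Re (sumZ \<phi> z)\<bar> \<le> B)
   \<and> (\<exists>G L. (\<forall>z. Im z > 0 \<longrightarrow> G (Up z) = Re (sumZ \<phi> z))
          \<and> (\<forall>p. hvalid p \<longrightarrow> G (hshift p) = G p)
          \<and> (\<forall>p. hvalid p \<longrightarrow> hcont_at G p)
          \<and> (\<forall>r>0. \<exists>M. \<forall>z. Im z > M \<longrightarrow> \<bar>Re (sumZ \<phi> z) - L\<bar> < r))
   \<and> (\<forall>M. (\<forall>w. Im w > 0 \<longrightarrow> \<bar>Re (\<phi> w)\<bar> \<le> M) \<longrightarrow>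
          (\<forall>z. Im z > 0 \<longrightarrow> \<bar>Re (sumZ \<phi> z)\<bar> \<le> C * M))"
proof (intro exI[of _ "Cconst (\<bar>a\<bar> + \<bar>b\<bar> + 1)"] allI impI)
  define R0 where "R0 = \<bar>a\<bar> + \<bar>b\<bar> + 1"
  fix \<phi> assume "\<phi> \<in> ChatR a b"
  then have hol: "\<phi> holomorphic_on (- (complex_of_real ` {a..b}))"
    and lim0: "(\<phi> \<longlongrightarrow> 0) at_infinity"
    and real: "\<And>z. z \<notin> complex_of_real ` {a..b} \<Longrightarrow> \<phi> (cnj z) = cnj (\<phi> z)"
    and exF: "\<exists>F. (\<forall>z. Im z > 0 \<longrightarrow> F (Up z) = Re (\<phi> z)) \<and> (\<forall>p. hvalid p \<longrightarrow> hcont_at F p)"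
    unfolding ChatR_def by auto
  obtain F where Fup: "\<And>z. Im z > 0 \<Longrightarrow> F (Up z) = Re (\<phi> z)" and Fcont: "\<forall>p. hvalid p \<longrightarrow> hcont_at F p"
    using exF by blast
  interpret msetup \<phi> a b R0 F
  proof unfold_locales
    show "R0 > 0" by (simp add: R0_def add_nonneg_pos)
    fix t assume "t \<in> {a..b}"
    then show "\<bar>t\<bar> < R0" unfolding R0_def by auto
  qed (use hol lim0 real Fup Fcont in auto)
  have CR: "Cconst (\<bar>a\<bar> + \<bar>b\<bar> + 1) = Cconst R0" by (simp add: R0_def)
  show "(\<forall>z. Im z > 0 \<longrightarrow> convergent (sumZ_part \<phi> z))
   \<and> (\<exists>B. \<forall>z. Im z > 0 \<longrightarrow> \<bar>Re (sumZ \<phi> z)\<bar> \<le> B)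
   \<and> (\<exists>G L. (\<forall>z. Im z > 0 \<longrightarrow> G (Up z) = Re (sumZ \<phi> z))
          \<and> (\<forall>p. hvalid p \<longrightarrow> G (hshift p) = G p)
          \<and> (\<forall>p. hvalid p \<longrightarrow> hcont_at G p)
          \<and> (\<forall>r>0. \<exists>M. \<forall>z. Im z > M \<longrightarrow> \<bar>Re (sumZ \<phi> z) - L\<bar> < r))
   \<and> (\<forall>M. (\<forall>w. Im w > 0 \<longrightarrow> \<bar>Re (\<phi> w)\<bar> \<le> M) \<longrightarrow>
          (\<forall>z. Im z > 0 \<longrightarrow> \<bar>Re (sumZ \<phi> z)\<bar> \<le> Cconst (\<bar>a\<bar> + \<bar>b\<bar> + 1) * M))"
    unfolding CR
  proof (intro conjI allI impI)
    show "convergent (sumZ_part \<phi> z)" for z by (rule sumZ_convergent)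
    show "\<exists>B. \<forall>z. Im z > 0 \<longrightarrow> \<bar>Re (sumZ \<phi> z)\<bar> \<le> B"
      using CM_bound[OF M0] G_Up by (intro exI[of _ "Cconst R0 * M0"]) auto
    show "\<exists>G L. (\<forall>z. Im z > 0 \<longrightarrow> G (Up z) = Re (sumZ \<phi> z))
          \<and> (\<forall>p. hvalid p \<longrightarrow> G (hshift p) = G p)
          \<and> (\<forall>p. hvalid p \<longrightarrow> hcont_at G p)
          \<and> (\<forall>r>0. \<exists>M. \<forall>z. Im z > M \<longrightarrow> \<bar>Re (sumZ \<phi> z) - L\<bar> < r)"
    proof (rule exI[of _ Gf], rule exI[of _ 0], intro conjI allI impI)
      show "Gf (Up z) = Re (sumZ \<phi> z)" if "Im z > 0" for z using G_Up that by blast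
      show "Gf (hshift p) = Gf p" if "hvalid p" for p using G_shift1[OF that] by (simp add: hshift_shb)
      show "hcont_at Gf p" if "hvalid p" for p using G_cont[OF that] .
      fix r :: real assume "r > 0"
      then obtain Y where Y: "\<And>z. Im z > Y \<Longrightarrow> \<bar>Gf (Up z)\<bar> < r" using lim_top by blast
      show "\<exists>M. \<forall>z. Im z > M \<longrightarrow> \<bar>Re (sumZ \<phi> z) - 0\<bar> < r"
      proof (intro exI[of _ "max Y 0"] allI impI)
        fix z assume z: "Im z > max Y 0"
        then show "\<bar>Re (sumZ \<phi> z) - 0\<bar> < r" using Y[of z] G_Up[of z] by simp
      qed
    qed
    fix M z assume bd: "\<forall>w. Im w > 0 \<longrightarrow> \<bar>Re (\<phi> w)\<bar> \<le> M" and z: "Im z > 0"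
    show "\<bar>Re (sumZ \<phi> z)\<bar> \<le> Cconst R0 * M"
      using CM_bound[of M z] bd z G_Up[OF z] by simp
  qed
qed


end
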